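(* Let $P$ be a monopolar $k$-chain in $V$ and $r\ge0$. Then $$|P|^{\natural_r}=\inf\Big\{\sum_{j=0}^r\|D^j\|_j:\ P=\sum_{j=0}^rD^j,\ D^j\in\mathcal D_k^j\Big\}.$$
   Context: $V$ is a finite-dimensional real vector space with inner product making a preferred basis orthonormal, norm $|\cdot|$. For a simple $k$-vector $\alpha=w_1\wedge\dots\wedge w_k$, $M(\alpha)$ is its mass ($k$-dimensional volume, $\sqrt{\det\langle w_i,w_j\rangle}$). A monopolar $k$-chain is a finite formal sum $P=\sum_i(p_i;\alpha_i)$ with $p_i\in V$, $\alpha_i\in\Lambda_k(V)$, subject to $(p;\alpha)+(p;\beta)=(p;\alpha+\beta)$, $t(p;\alpha)=(p;t\alpha)$; these form the vector space $\mathcal P_k^0(V)$. Translation: $T_u(p;\alpha)=(p+u;\alpha)$, extended linearly; $\Delta_u=T_u-\mathrm{id}$; for $U=(u_1,\dots,u_j)$, $\Delta^j_U=\Delta_{u_1}\circ\dots\circ\Delta_{u_j}$ ($\Delta^0$ = identity); $\|\Delta^j_U(p;\alpha)\|_j=|u_1|\cdots|u_j|M(\alpha)$. A $k$-form is a linear functional $\omega$ on $\mathcal P_k^0(V)$. Set $\|\omega\|_0=\sup\{|\omega(p;\alpha)|:\alpha\text{ simple},M(\alpha)=1\}$ and, for $j\ge1$, $\|\omega\|_j=\sup\{|\omega(\Delta^j_U(p;\alpha))|:\|\Delta^j_U(p;\alpha)\|_j=1\}$ ($\alpha$ simple); $|\omega|^{\natural_r}=\max\{\|\omega\|_0,\dots,\|\omega\|_r\}$,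 and $\mathcal B_k^r$ is the space of $k$-forms with $|\omega|^{\natural_r}<\infty$. For $P\in\mathcal P_k^0(V)$, $|P|^{\natural_r}=\sup_{0\ne\omega\in\mathcal B_k^r}\omega(P)/|\omega|^{\natural_r}$. $\mathcal D_k^j$ is the subspace of $\mathcal P_k^0(V)$ spanned by the chains $\Delta^j_U(p;\alpha)$ ($\mathcal D_k^0=\mathcal P_k^0(V)$), and for $D^j\in\mathcal D_k^j$, $\|D^j\|_j=\sup\omega(D^j)/\|\omega\|_j$ over $k$-forms with $0<\|\omega\|_j<\infty$. *)

theory Defs
  imports "HOL-Analysis.Analysis"
begin

text \<open>V is modelled by a Euclidean space 'a (finite-dimensional, inner product with
orthonormal Basis).  A k-vector alpha is represented faithfully (injectively) by the
function I \<mapsto> <alpha, I_1 \<and> ... \<and> I_k> on lists I of length k; a monopolar chain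
is represented by its coefficient function p \<mapsto> alpha_p (finite support).\<close>

definition detk :: "nat \<Rightarrow> (nat \<Rightarrow> nat \<Rightarrow> real) \<Rightarrow> real" where
  "detk n M = (\<Sum>\<sigma> | \<sigma> permutes {..<n}. of_int (sign \<sigma>) * (\<Prod>a<n. M a (\<sigma> a)))"

definition wedge :: "'a::euclidean_space list \<Rightarrow> 'a list \<Rightarrow> real" where
  "wedge w I = (if length I = length w
     then detk (length w) (\<lambda>a b. inner (w ! a) (I ! b)) else 0)"

definition mass :: "'a::euclidean_space list \<Rightarrow> real" where
  "mass w = sqrt (detk (length w) (\<lambda>a b. inner (w ! a) (w ! b)))"

definition kvectors :: "nat \<Rightarrow> ('a::euclidean_space list \<Rightarrow> real) set" where
  "kvectors k = {\<alpha>. \<exists>n c (w :: nat \<Rightarrow> 'a list). (\<forall>i<n. length (w i) = k) \<and>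
                      \<alpha> = (\<lambda>I. \<Sum>i<n. c i * wedge (w i) I)}"

type_synonym 'a chain = "'a \<Rightarrow> 'a list \<Rightarrow> real"

definition mono :: "'a \<Rightarrow> ('a list \<Rightarrow> real) \<Rightarrow> 'a chain" where
  "mono p \<alpha> = (\<lambda>q. if q = p then \<alpha> else (\<lambda>_. 0))"

definition chains :: "nat \<Rightarrow> ('a::euclidean_space) chain set" where
  "chains k = {P. finite {p. P p \<noteq> (\<lambda>_. 0)} \<and> (\<forall>p. P p \<in> kvectors k)}"

definition cadd :: "'a chain \<Rightarrow> 'a chain \<Rightarrow> 'a chain" where
  "cadd P Q = (\<lambda>q I. P q I + Q q I)"

definition cscale :: "real \<Rightarrow> 'a chain \<Rightarrow> 'a chain" where
  "cscale c P = (\<lambda>q I. c * P q I)"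

definition transl :: "'a::euclidean_space \<Rightarrow> 'a chain \<Rightarrow> 'a chain" where
  "transl u P = (\<lambda>q. P (q - u))"

definition delta :: "'a::euclidean_space \<Rightarrow> 'a chain \<Rightarrow> 'a chain" where
  "delta u P = (\<lambda>q I. transl u P q I - P q I)"

definition deltas :: "'a::euclidean_space list \<Rightarrow> 'a chain \<Rightarrow> 'a chain" where
  "deltas U P = foldr delta U P"

definition Ddiff :: "nat \<Rightarrow> nat \<Rightarrow> ('a::euclidean_space) chain set" where
  "Ddiff k j = {D. \<exists>n c (U :: nat \<Rightarrow> 'a list) (p :: nat \<Rightarrow> 'a) (w :: nat \<Rightarrow> 'a list). (\<forall>i<n. length (U i) = j \<and> length (w i) = k) \<and>
      D = (\<lambda>q I. \<Sum>i<n. c i * deltas (U i) (mono (p i) (wedge (w i))) q I)}"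

text \<open>k-forms: linear functionals on P_k^0(V) (values off chains are irrelevant).\<close>
definition kform :: "nat \<Rightarrow> ('a::euclidean_space chain \<Rightarrow> real) \<Rightarrow> bool" where
  "kform k \<Omega> \<longleftrightarrow> (\<forall>P\<in>chains k. \<forall>Q\<in>chains k. \<Omega> (cadd P Q) = \<Omega> P + \<Omega> Q) \<and>
                  (\<forall>c. \<forall>P\<in>chains k. \<Omega> (cscale c P) = c * \<Omega> P)"

text \<open>||omega||_j (j = 0 gives ||omega||_0, since Delta^0 = id and the weight is M(alpha)).\<close>
definition formnorm :: "nat \<Rightarrow> nat \<Rightarrow> ('a::euclidean_space chain \<Rightarrow> real) \<Rightarrow> ennreal" where
  "formnorm k j \<Omega> = Sup {ennreal \<bar>\<Omega> (deltas U (mono p (wedge w)))\<bar> | U p w.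
      length U = j \<and> length w = k \<and> prod_list (map norm U) * mass w = 1}"

definition natnorm :: "nat \<Rightarrow> nat \<Rightarrow> ('a::euclidean_space chain \<Rightarrow> real) \<Rightarrow> ennreal" where
  "natnorm k r \<Omega> = Max ((\<lambda>j. formnorm k j \<Omega>) ` {..r})"

text \<open>|P|^{natural_r}; the supremum ranges over nonzero forms in B_k^r.
  (0 is inserted only to fix sup of the empty set; it does not change the
  supremum otherwise, since omega and -omega both occur.)\<close>
definition chain_natnorm :: "nat \<Rightarrow> nat \<Rightarrow> 'a::euclidean_space chain \<Rightarrow> ereal" where
  "chain_natnorm k r P = Sup (insert 0 {ereal (\<Omega> P / enn2real (natnorm k r \<Omega>)) | \<Omega>.
      kform k \<Omega> \<and> (\<exists>Q\<in>chains k. \<Omega> Q \<noteq> 0) \<and> natnorm k r \<Omega> < top})"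

definition Dnorm :: "nat \<Rightarrow> nat \<Rightarrow> 'a::euclidean_space chain \<Rightarrow> ereal" where
  "Dnorm k j D = Sup (insert 0 {ereal (\<Omega> D / enn2real (formnorm k j \<Omega>)) | \<Omega>.
      kform k \<Omega> \<and> 0 < formnorm k j \<Omega> \<and> formnorm k j \<Omega> < top})"

end

theory Submission
  imports Defs "Jordan_Normal_Form.Determinant"
begin


lemma sum_concat: fixes n1 n2 :: nat shows
  "(\<Sum>i<n1+n2. (if i < n1 then f i else g (i - n1))) = (\<Sum>i<n1. f i) + (\<Sum>i<n2. (g i :: real))"
  by (induction n2) (auto simp: add.assoc)

lemma kv_zero: "(\<lambda>_. 0) \<in> kvectors k"
  unfolding kvectors_def by (rule CollectI, rule exI[of _ 0]) auto

lemma kv_add: assumes "\<alpha> \<in> kvectors k" "\<beta> \<in> kvectors k"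
  shows "(\<lambda>I. \<alpha> I + \<beta> I) \<in> kvectors k"
proof -
  obtain n1 :: nat and c1 w1 where 1: "\<forall>i<n1. length (w1 i) = k" "\<alpha> = (\<lambda>I. \<Sum>i<n1. c1 i * wedge (w1 i) I)"
    using assms(1) unfolding kvectors_def by blast
  obtain n2 :: nat and c2 w2 where 2: "\<forall>i<n2. length (w2 i) = k" "\<beta> = (\<lambda>I. \<Sum>i<n2. c2 i * wedge (w2 i) I)"
    using assms(2) unfolding kvectors_def by blast
  define c where "c i = (if i < n1 then c1 i else c2 (i - n1))" for i
  define w where "w i = (if i < n1 then w1 i else w2 (i - n1))" for i
  have "\<forall>i<n1+n2. length (w i) = k" using 1 2 by (auto simp: w_def)
  moreover have "(\<lambda>I. \<alpha> I + \<beta> I) = (\<lambda>I. \<Sum>i<n1+n2. c i * wedge (w i) I)"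
  proof
    fix I
    have "(\<Sum>i<n1+n2. c i * wedge (w i) I) = (\<Sum>i<n1+n2. (if i < n1 then c1 i * wedge (w1 i) I
        else c2 (i - n1) * wedge (w2 (i - n1)) I))"
      by (rule sum.cong[OF refl]) (simp add: c_def w_def)
    also have "\<dots> = (\<Sum>i<n1. c1 i * wedge (w1 i) I) + (\<Sum>i<n2. c2 i * wedge (w2 i) I)"
      by (rule sum_concat)
    finally show "\<alpha> I + \<beta> I = (\<Sum>i<n1+n2. c i * wedge (w i) I)"
      using 1 2 by simp
  qed
  ultimately show ?thesis unfolding kvectors_def
    by (intro CollectI exI[of _ "n1+n2"] exI[of _ c] exI[of _ w] conjI)
qed

lemma kv_scale: assumes "\<alpha> \<in> kvectors k"
  shows "(\<lambda>I. t * \<alpha> I) \<in> kvectors k"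
proof -
  obtain n :: nat and c w where 1: "\<forall>i<n. length (w i) = k" "\<alpha> = (\<lambda>I. \<Sum>i<n. c i * wedge (w i) I)"
    using assms(1) unfolding kvectors_def by blast
  have "(\<lambda>I. t * \<alpha> I) = (\<lambda>I. \<Sum>i<n. (t * c i) * wedge (w i) I)"
    using 1 by (simp add: sum_distrib_left mult.assoc)
  then show ?thesis using 1 unfolding kvectors_def
    by (intro CollectI exI[of _ n] exI[of _ "\<lambda>i. t * c i"] exI[of _ w] conjI)
qed

lemma wedge_kv: "length w = k \<Longrightarrow> wedge w \<in> kvectors k"
  unfolding kvectors_def
  by (rule CollectI, rule exI[of _ 1], rule exI[of _ "\<lambda>_. 1"], rule exI[of _ "\<lambda>_. w"]) auto

definition supp :: "'a chain \<Rightarrow> 'a set" where "supp P = {p. P p \<noteq> (\<lambda>_. 0)}"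

lemma chainsI: "finite (supp P) \<Longrightarrow> (\<And>p. P p \<in> kvectors k) \<Longrightarrow> P \<in> chains k"
  unfolding chains_def supp_def by auto

lemma chainsD: "P \<in> chains k \<Longrightarrow> finite (supp P)" "P \<in> chains k \<Longrightarrow> P p \<in> kvectors k"
  unfolding chains_def supp_def by auto

lemma chains_zero: "(\<lambda>_ _. 0) \<in> chains k"
  by (rule chainsI) (auto simp: supp_def kv_zero)

lemma chains_add: assumes "P \<in> chains k" "Q \<in> chains k" shows "cadd P Q \<in> chains k"
proof (rule chainsI)
  have "supp (cadd P Q) \<subseteq> supp P \<union> supp Q" by (auto simp: supp_def cadd_def fun_eq_iff)
  then show "finite (supp (cadd P Q))" using chainsD(1)[OF assms(1)] chainsD(1)[OF assms(2)]
    by (meson finite_UnI finite_subset)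
  show "cadd P Q p \<in> kvectors k" for p unfolding cadd_def
    using kv_add[OF chainsD(2)[OF assms(1)] chainsD(2)[OF assms(2)]] by simp
qed

lemma chains_scale: assumes "P \<in> chains k" shows "cscale t P \<in> chains k"
proof (rule chainsI)
  have "supp (cscale t P) \<subseteq> supp P" by (auto simp: supp_def cscale_def fun_eq_iff)
  then show "finite (supp (cscale t P))" using chainsD(1)[OF assms(1)] by (meson finite_subset)
  show "cscale t P p \<in> kvectors k" for p unfolding cscale_def
    using kv_scale[OF chainsD(2)[OF assms(1)]] by simp
qed

lemma chains_sum: assumes "finite A" "\<And>i. i \<in> A \<Longrightarrow> f i \<in> chains k"
  shows "(\<lambda>q I. \<Sum>i\<in>A. f i q I) \<in> chains k"
  using assms
proof (induction A rule: finite_induct)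
  case empty then show ?case using chains_zero by simp
next
  case (insert x F)
  have "(\<lambda>q I. \<Sum>i\<in>insert x F. f i q I) = cadd (f x) (\<lambda>q I. \<Sum>i\<in>F. f i q I)"
    using insert by (simp add: cadd_def)
  then show ?case using insert chains_add by auto
qed

lemma chains_mono: assumes "\<alpha> \<in> kvectors k" shows "mono p \<alpha> \<in> chains k"
proof (rule chainsI)
  have "supp (mono p \<alpha>) \<subseteq> {p}" by (auto simp: supp_def mono_def)
  then show "finite (supp (mono p \<alpha>))" using finite_subset by blast
  show "mono p \<alpha> q \<in> kvectors k" for q using assms by (simp add: mono_def kv_zero)
qed

lemma chains_transl: assumes "P \<in> chains k" shows "transl u P \<in> chains k"
proof (rule chainsI)
  have "supp (transl u P) = (\<lambda>q. q + u) ` supp P"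
    apply (auto simp: supp_def transl_def image_iff)
    by (rule_tac x="x - u" in exI) simp
  then show "finite (supp (transl u P))" using chainsD(1)[OF assms] by simp
  show "transl u P p \<in> kvectors k" for p unfolding transl_def using chainsD(2)[OF assms] by simp
qed

lemma chains_delta: assumes "P \<in> chains k" shows "delta u P \<in> chains k"
proof -
  have "delta u P = cadd (transl u P) (cscale (-1) P)"
    by (simp add: delta_def cadd_def cscale_def fun_eq_iff)
  then show ?thesis using assms chains_add chains_scale chains_transl by metis
qed

lemma deltas_Cons[simp]: "deltas (u # U) P = delta u (deltas U P)"
  and deltas_Nil[simp]: "deltas [] P = P"
  by (simp_all add: deltas_def)

lemma chains_deltas: "P \<in> chains k \<Longrightarrow> deltas U P \<in> chains k"
  by (induction U) (auto intro: chains_delta)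

lemma deltas_scale: "deltas U (cscale t P) = cscale t (deltas U P)"
  by (induction U) (auto simp: delta_def transl_def cscale_def fun_eq_iff algebra_simps)

lemma deltas_add: "deltas U (cadd P Q) = cadd (deltas U P) (deltas U Q)"
  by (induction U) (auto simp: delta_def transl_def cadd_def fun_eq_iff algebra_simps)

lemma deltas_zero: "deltas U (\<lambda>_ _. 0) = (\<lambda>_ _. 0)"
  by (induction U) (auto simp: delta_def transl_def fun_eq_iff)

lemma deltas_zero_vec: "0 \<in> set U \<Longrightarrow> deltas U P = (\<lambda>_ _. 0)"
proof (induction U)
  case (Cons u U)
  then show ?case
    by (cases "u = 0") (auto simp: delta_def transl_def fun_eq_iff deltas_zero)
qed simp

definition gen :: "'a::euclidean_space list \<Rightarrow> 'a \<Rightarrow> 'a list \<Rightarrow> 'a chain" where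
  "gen U p w = deltas U (mono p (wedge w))"

lemma chains_gen: "length w = k \<Longrightarrow> gen U p w \<in> chains k"
  unfolding gen_def by (intro chains_deltas chains_mono wedge_kv)

lemma Ddiff_alt: "Ddiff k j = {D. \<exists>(n::nat) c U p w. (\<forall>i<n. length (U i) = j \<and> length (w i) = k) \<and>
      D = (\<lambda>q I. \<Sum>i<n. c i * gen (U i) (p i) (w i) q I)}"
  by (simp add: Ddiff_def gen_def)

lemma Ddiff_chains: assumes "D \<in> Ddiff k j" shows "D \<in> chains k"
proof -
  obtain n :: nat and c U p w where 1: "\<forall>i<n. length (U i) = j \<and> length (w i) = k"
    "D = (\<lambda>q I. \<Sum>i<n. c i * gen (U i) (p i) (w i) q I)"
    using assms unfolding Ddiff_alt by blast
  have "D = (\<lambda>q I. \<Sum>i<n. cscale (c i) (gen (U i) (p i) (w i)) q I)"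
    using 1 by (simp add: cscale_def)
  also have "\<dots> \<in> chains k"
    using 1 by (intro chains_sum chains_scale chains_gen) auto
  finally show ?thesis .
qed

lemma kform_add: "kform k \<Omega> \<Longrightarrow> P \<in> chains k \<Longrightarrow> Q \<in> chains k \<Longrightarrow> \<Omega> (cadd P Q) = \<Omega> P + \<Omega> Q"
  unfolding kform_def by blast
lemma kform_scale: "kform k \<Omega> \<Longrightarrow> P \<in> chains k \<Longrightarrow> \<Omega> (cscale c P) = c * \<Omega> P"
  unfolding kform_def by blast
lemma kform_zero: "kform k \<Omega> \<Longrightarrow> \<Omega> (\<lambda>_ _. 0) = 0"
proof -
  assume a: "kform k \<Omega>"
  have "\<Omega> (\<lambda>_ _. 0) = \<Omega> (cscale 0 (\<lambda>_ _. 0))" by (simp add: cscale_def)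
  also have "\<dots> = 0" using kform_scale[OF a chains_zero] by simp
  finally show ?thesis .
qed

lemma kform_sum: assumes "kform k \<Omega>" "finite A" "\<And>i. i \<in> A \<Longrightarrow> f i \<in> chains k"
  shows "\<Omega> (\<lambda>q I. \<Sum>i\<in>A. f i q I) = (\<Sum>i\<in>A. \<Omega> (f i))"
  using assms(2,3)
proof (induction A rule: finite_induct)
  case empty then show ?case using kform_zero[OF assms(1)] by simp
next
  case (insert x F)
  have e: "(\<lambda>q I. \<Sum>i\<in>insert x F. f i q I) = cadd (f x) (\<lambda>q I. \<Sum>i\<in>F. f i q I)"
    using insert.hyps by (simp add: cadd_def)
  have "\<Omega> (cadd (f x) (\<lambda>q I. \<Sum>i\<in>F. f i q I)) = \<Omega> (f x) + \<Omega> (\<lambda>q I. \<Sum>i\<in>F. f i q I)"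
    using insert.prems insert.hyps by (intro kform_add[OF assms(1)] chains_sum[of F f k]) auto
  then show ?case using e insert.IH insert.prems insert.hyps by simp
qed

lemma kform_lincomb: assumes "kform k \<Omega>" "finite A" "\<And>i. i \<in> A \<Longrightarrow> f i \<in> chains k"
  shows "\<Omega> (\<lambda>q I. \<Sum>i\<in>A. c i * f i q I) = (\<Sum>i\<in>A. c i * \<Omega> (f i))"
proof -
  have "\<Omega> (\<lambda>q I. \<Sum>i\<in>A. c i * f i q I) = \<Omega> (\<lambda>q I. \<Sum>i\<in>A. cscale (c i) (f i) q I)"
    by (simp add: cscale_def)
  also have "\<dots> = (\<Sum>i\<in>A. \<Omega> (cscale (c i) (f i)))"
    using assms by (intro kform_sum) (auto intro: chains_scale)
  also have "\<dots> = (\<Sum>i\<in>A. c i * \<Omega> (f i))"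
    by (simp add: kform_scale[OF assms(1)] assms(3))
  finally show ?thesis .
qed



lemma detk_mat: "detk n M = Determinant.det (Matrix.mat n n (\<lambda>(a,b). M a b))"
  unfolding detk_def det_def by (simp add: lessThan_atLeast0)

lemma detk_zero_kernel:
  assumes "detk n M = 0"
  shows "\<exists>v. (\<exists>a<n. v a \<noteq> 0) \<and> (\<forall>a<n. (\<Sum>b<n. M a b * v b) = 0)"
proof -
  let ?A = "Matrix.mat n n (\<lambda>(a,b). M a b) :: real Matrix.mat"
  have A: "?A \<in> carrier_mat n n" by simp
  from assms obtain v where v: "v \<in> carrier_vec n" "v \<noteq> 0\<^sub>v n" "?A *\<^sub>v v = 0\<^sub>v n"
    unfolding detk_mat det_0_iff_vec_prod_zero_field[OF A] by blast
  have "\<exists>a<n. vec_index v a \<noteq> 0"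
    using v(1,2) by (auto simp: vec_eq_iff)
  moreover have "(\<Sum>b<n. M a b * vec_index v b) = 0" if "a < n" for a
  proof -
    have "vec_index (?A *\<^sub>v v) a = 0" using v(3) that by simp
    then show ?thesis using that v(1)
      by (simp add: scalar_prod_def lessThan_atLeast0)
  qed
  ultimately show ?thesis by blast
qed

lemma detk_transpose: "detk n (\<lambda>a b. M b a) = detk n M"
proof -
  have "Matrix.mat n n (\<lambda>(a,b). M b a) = transpose_mat (Matrix.mat n n (\<lambda>(a,b). M a b))"
    by (auto simp: Matrix.mat_eq_iff)
  then show ?thesis unfolding detk_mat
    by (simp add: det_transpose[of _ n])
qed

lemma detk_zero_left:
  assumes "a0 < n" "v a0 \<noteq> 0" "\<And>b. b < n \<Longrightarrow> (\<Sum>a<n. v a * M a b) = 0"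
  shows "detk n M = 0"
proof -
  let ?A = "Matrix.mat n n (\<lambda>(b,a). M a b) :: real Matrix.mat"
  have A: "?A \<in> carrier_mat n n" by simp
  let ?v = "Matrix.vec n v"
  have "?v \<noteq> 0\<^sub>v n" using assms(1,2) by (auto simp: vec_eq_iff)
  moreover have "?A *\<^sub>v ?v = 0\<^sub>v n"
    using assms(3) by (auto simp: vec_eq_iff scalar_prod_def lessThan_atLeast0 mult.commute)
  ultimately have "Determinant.det ?A = 0"
    unfolding det_0_iff_vec_prod_zero_field[OF A] by (intro exI[of _ ?v]) auto
  then have "detk n (\<lambda>a b. M b a) = 0" unfolding detk_mat by simp
  then show ?thesis using detk_transpose[of n M] by simp
qed

lemma detk_rowcol: "detk n (\<lambda>a b. f a * g b * M a b) = (\<Prod>a<n. f a) * (\<Prod>b<n. g b) * detk n M"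
proof -
  have "(\<Prod>a<n. f a * g (\<sigma> a) * M a (\<sigma> a)) = (\<Prod>a<n. f a) * (\<Prod>b<n. g b) * (\<Prod>a<n. M a (\<sigma> a))"
    if "\<sigma> permutes {..<n}" for \<sigma>
  proof -
    have "(\<Prod>a<n. g (\<sigma> a)) = (\<Prod>b<n. g b)"
      using prod.permute[OF that, of g] by (simp add: comp_def)
    then show ?thesis by (simp add: prod.distrib)
  qed
  then show ?thesis unfolding detk_def sum_distrib_left
    by (intro sum.cong refl) (simp add: algebra_simps)
qed

lemma gram_kernel:
  fixes w :: "'a::euclidean_space list"
  assumes "\<And>a. a < length w \<Longrightarrow> (\<Sum>b<length w. inner (w!a) (w!b) * v b) = 0"
  shows "(\<Sum>b<length w. v b *\<^sub>R (w!b)) = 0"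
proof -
  let ?s = "\<Sum>b<length w. v b *\<^sub>R (w!b)"
  have 1: "inner (w!a) ?s = 0" if "a < length w" for a
    using assms[OF that] by (simp add: inner_sum_right mult.commute)
  have "inner ?s ?s = (\<Sum>a<length w. v a * inner (w!a) ?s)"
    by (simp add: inner_sum_left)
  also have "\<dots> = 0" using 1 by simp
  finally show ?thesis by simp
qed

definition gram :: "'a::euclidean_space list \<Rightarrow> nat \<Rightarrow> nat \<Rightarrow> real" where
  "gram w = (\<lambda>a b. inner (w ! a) (w ! b))"

lemma mass_gram: "mass w = sqrt (detk (length w) (gram w))"
  unfolding mass_def gram_def ..

lemma wedge_zero:
  assumes "detk (length w) (gram w) = 0"
  shows "wedge w I = 0"
proof (cases "length I = length w")
  case True
  obtain v where v: "\<exists>a<length w. v a \<noteq> 0" "\<forall>a<length w. (\<Sum>b<length w. gram w a b * v b) = 0"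
    using detk_zero_kernel[OF assms] by blast
  have s: "(\<Sum>b<length w. v b *\<^sub>R (w!b)) = 0"
    using v(2) by (intro gram_kernel) (auto simp: gram_def)
  obtain a0 where a0: "a0 < length w" "v a0 \<noteq> 0" using v(1) by blast
  have "detk (length w) (\<lambda>a b. inner (w ! a) (I ! b)) = 0"
  proof (rule detk_zero_left[of a0 "length w" v, OF a0])
    fix b
    have "(\<Sum>a<length w. v a * inner (w ! a) (I ! b)) = inner (\<Sum>a<length w. v a *\<^sub>R (w!a)) (I ! b)"
      by (simp add: inner_sum_left)
    then show "(\<Sum>a<length w. v a * inner (w ! a) (I ! b)) = 0" using s by simp
  qed
  then show ?thesis unfolding wedge_def using True by simp
qed (simp add: wedge_def)

lemma detk_id: "detk n (\<lambda>a b. if a = b then 1 else 0) = 1"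
proof -
  have "Matrix.mat n n (\<lambda>(a,b). if a = b then 1 else 0) = (1\<^sub>m n :: real Matrix.mat)"
    by (auto simp: Matrix.mat_eq_iff)
  then show ?thesis unfolding detk_mat by simp
qed

lemma gram_nonneg: "detk (length w) (gram w) \<ge> 0"
proof (rule ccontr)
  let ?n = "length w"
  define G where "G s = (\<lambda>a b. (1 - s) * (if a = b then 1 else 0) + s * gram w a b)" for s :: real
  define f where "f s = detk ?n (G s)" for s
  assume "\<not> ?thesis"
  then have f1: "f 1 < 0" by (simp add: f_def G_def)
  have f0: "f 0 = 1" by (simp add: f_def G_def detk_id)
  have cont: "continuous_on {0..1} f"
    unfolding f_def G_def detk_def by (intro continuous_intros)
  obtain s where s: "0 \<le> s" "s \<le> 1" "f s = 0"
    using IVT2'[of f 1 0 0] f0 f1 cont by force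
  then have s1: "s < 1" using f1 by (cases "s = 1") auto
  obtain v where v: "\<exists>a<?n. v a \<noteq> 0" "\<forall>a<?n. (\<Sum>b<?n. G s a b * v b) = 0"
    using detk_zero_kernel[of ?n "G s"] s(3) unfolding f_def by blast
  let ?t = "\<Sum>b<?n. v b *\<^sub>R (w!b)"
  have row: "(1 - s) * v a + s * inner (w!a) ?t = 0" if "a < ?n" for a
  proof -
    have "(\<Sum>b<?n. G s a b * v b) = (\<Sum>b<?n. (1 - s) * (if a = b then v b else 0) + s * (gram w a b * v b))"
      by (intro sum.cong refl) (simp add: G_def algebra_simps)
    also have "\<dots> = (1 - s) * (\<Sum>b<?n. (if a = b then v b else 0)) + s * (\<Sum>b<?n. gram w a b * v b)"
      by (simp only: sum.distrib sum_distrib_left)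
    also have "(\<Sum>b<?n. (if a = b then v b else 0)) = v a"
      using that by (simp add: sum.delta)
    also have "(\<Sum>b<?n. gram w a b * v b) = inner (w!a) ?t"
      by (simp add: inner_sum_right gram_def mult.commute)
    finally show ?thesis using v(2) that by simp
  qed
  have "0 = (\<Sum>a<?n. v a * ((1 - s) * v a + s * inner (w!a) ?t))"
    using row by simp
  also have "\<dots> = (\<Sum>a<?n. (1 - s) * (v a * v a) + s * (v a * inner (w!a) ?t))"
    by (intro sum.cong refl) (simp add: algebra_simps)
  also have "\<dots> = (1 - s) * (\<Sum>a<?n. v a * v a) + s * (\<Sum>a<?n. v a * inner (w!a) ?t)"
    by (simp only: sum.distrib sum_distrib_left)
  also have "(\<Sum>a<?n. v a * inner (w!a) ?t) = inner ?t ?t"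
    by (simp add: inner_sum_left)
  finally have eq: "(1 - s) * (\<Sum>a<?n. v a * v a) + s * inner ?t ?t = 0" by simp
  obtain a0 where a0: "a0 < ?n" "v a0 \<noteq> 0" using v(1) by blast
  have "(\<Sum>a<?n. v a * v a) > 0"
  proof (rule sum_pos2[of "{..<?n}" a0])
    show "0 < v a0 * v a0" using a0(2) not_real_square_gt_zero by blast
  qed (use a0 in auto)
  moreover have "s * inner ?t ?t \<ge> 0" using s by simp
  ultimately show False using eq s1 by (smt (verit) mult_pos_pos)
qed

lemma mass_nonneg: "mass w \<ge> 0"
  using gram_nonneg by (simp add: mass_gram)

lemma mass_zero_wedge: "mass w = 0 \<Longrightarrow> wedge w = (\<lambda>_. 0)"
  using wedge_zero by (auto simp: mass_gram)

definition scw :: "real \<Rightarrow> 'a::euclidean_space list \<Rightarrow> 'a list" where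
  "scw t w = (t *\<^sub>R hd w) # tl w"

lemma scw_nth: "w \<noteq> [] \<Longrightarrow> scw t w ! a = (if a = 0 then t else 1) *\<^sub>R (w ! a)"
  by (cases w; cases a) (auto simp: scw_def)

lemma scw_length[simp]: "w \<noteq> [] \<Longrightarrow> length (scw t w) = length w"
  by (cases w) (auto simp: scw_def)

lemma prod_delta0: fixes n :: nat shows "(\<Prod>a<n. (if a = 0 then t else (1::real))) = (if 0 < n then t else 1)"
  by (induction n) auto

lemma wedge_scw: assumes "w \<noteq> []" shows "wedge (scw t w) I = t * wedge w I"
proof (cases "length I = length w")
  case True
  have "detk (length w) (\<lambda>a b. inner (scw t w ! a) (I ! b))
      = detk (length w) (\<lambda>a b. (if a = 0 then t else 1) * 1 * inner (w ! a) (I ! b))"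
    using assms by (simp add: scw_nth)
  also have "\<dots> = t * detk (length w) (\<lambda>a b. inner (w ! a) (I ! b))"
    unfolding detk_rowcol using assms by (simp add: prod_delta0)
  finally show ?thesis using True assms by (simp add: wedge_def)
qed (use assms in \<open>simp add: wedge_def\<close>)

lemma mass_scw: assumes "w \<noteq> []" shows "mass (scw t w) = \<bar>t\<bar> * mass w"
proof -
  have "detk (length w) (gram (scw t w))
      = detk (length w) (\<lambda>a b. (if a = 0 then t else 1) * (if b = 0 then t else 1) * gram w a b)"
    using assms by (simp add: scw_nth gram_def algebra_simps)
  also have "\<dots> = (t * t) * detk (length w) (gram w)"
    unfolding detk_rowcol using assms by (simp add: prod_delta0)
  finally show ?thesis using assms
    by (simp add: mass_gram real_sqrt_mult)
qed



lemma detk0: "detk 0 M = 1"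
  by (simp add: detk_def)

lemma mass_Nil: "mass [] = 1"
  by (simp add: mass_def detk0)

lemma prod_norm_nonneg: "prod_list (map norm (U :: 'a::real_normed_vector list)) \<ge> 0"
  by (induction U) auto

lemma prod_norm_zero: "prod_list (map norm (U :: 'a::real_normed_vector list)) = 0 \<Longrightarrow> 0 \<in> set U"
  by (induction U) auto

lemma mono_zero: "mono p (\<lambda>_. 0) = (\<lambda>_ _. 0)"
  by (auto simp: mono_def fun_eq_iff)

lemma mono_scale: "mono p (\<lambda>I. t * \<alpha> I) = cscale t (mono p \<alpha>)"
  by (auto simp: mono_def cscale_def fun_eq_iff)

lemma formnorm_ge:
  assumes "length U = j" "length w = k" "prod_list (map norm U) * mass w = 1"
  shows "ennreal \<bar>\<Omega> (gen U p w)\<bar> \<le> formnorm k j \<Omega>"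
  unfolding formnorm_def gen_def
  by (rule Sup_upper) (use assms in blast)

lemma gen_zero_mass: "prod_list (map norm U) * mass w = 0 \<Longrightarrow> gen U p w = (\<lambda>_ _. 0)"
  by (auto simp: gen_def mass_zero_wedge mono_zero deltas_zero deltas_zero_vec dest!: prod_norm_zero)

lemma formnorm_bound:
  assumes "kform k \<Omega>" "w \<noteq> []" "length U = j" "length w = k"
  shows "ennreal \<bar>\<Omega> (gen U p w)\<bar> \<le> ennreal (prod_list (map norm U) * mass w) * formnorm k j \<Omega>"
proof -
  define c where "c = prod_list (map norm U) * mass w"
  have c0: "c \<ge> 0" unfolding c_def using prod_norm_nonneg mass_nonneg by (intro mult_nonneg_nonneg)
  show ?thesis
  proof (cases "c = 0")
    case True
    then show ?thesis using gen_zero_mass[of U w p] kform_zero[OF assms(1)] by (simp add: c_def)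
  next
    case False
    then have cpos: "c > 0" using c0 by simp
    define w' where "w' = scw (1 / c) w"
    have lw: "length w' = k" using assms by (simp add: w'_def)
    have mw: "mass w' = mass w / c" using assms cpos by (simp add: w'_def mass_scw)
    have norm1: "prod_list (map norm U) * mass w' = 1"
      using cpos unfolding mw times_divide_eq_right c_def[symmetric] by simp
    have "wedge w' = (\<lambda>I. (1 / c) * wedge w I)" using assms by (simp add: w'_def wedge_scw fun_eq_iff)
    then have "gen U p w' = cscale (1 / c) (gen U p w)"
      unfolding gen_def by (simp only: mono_scale deltas_scale)
    then have eq: "\<Omega> (gen U p w') = (1 / c) * \<Omega> (gen U p w)"
      using kform_scale[OF assms(1) chains_gen[OF assms(4)]] by simp
    have "ennreal \<bar>\<Omega> (gen U p w')\<bar> \<le> formnorm k j \<Omega>"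
      by (rule formnorm_ge[OF assms(3) lw norm1])
    moreover have "\<bar>\<Omega> (gen U p w)\<bar> = c * \<bar>\<Omega> (gen U p w')\<bar>" using eq cpos by (simp add: abs_mult)
    ultimately show ?thesis unfolding c_def[symmetric]
      by (simp add: ennreal_mult c0 mult_left_mono)
  qed
qed

lemma formnorm_bound0:
  assumes "kform k \<Omega>" "length w = k"
  shows "ennreal \<bar>\<Omega> (gen [] p w)\<bar> \<le> ennreal (mass w) * formnorm k 0 \<Omega>"
proof (cases "w = []")
  case True
  then show ?thesis using formnorm_ge[of "[]" 0 w k \<Omega> p] assms by (simp add: mass_Nil)
next
  case False
  then show ?thesis using formnorm_bound[OF assms(1) False, of "[]" 0 p] assms by simp
qed

lemma formnorm_zero_kill:
  assumes "kform k \<Omega>" "k \<ge> 1" "formnorm k j \<Omega> = 0" "length U = j" "length w = k"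
  shows "\<Omega> (gen U p w) = 0"
proof -
  have "w \<noteq> []" using assms by auto
  from formnorm_bound[OF assms(1) this assms(4,5), of p] assms(3)
  show ?thesis by simp
qed

lemma Ddiff_zero: "(\<lambda>_ _. 0) \<in> Ddiff k j"
  unfolding Ddiff_alt by (rule CollectI, rule exI[of _ 0]) auto

lemma Ddiff_add: assumes "D1 \<in> Ddiff k j" "D2 \<in> Ddiff k j"
  shows "cadd D1 D2 \<in> Ddiff k j"
proof -
  obtain n1 :: nat and c1 U1 p1 w1 where 1: "\<forall>i<n1. length (U1 i) = j \<and> length (w1 i) = k"
    "D1 = (\<lambda>q I. \<Sum>i<n1. c1 i * gen (U1 i) (p1 i) (w1 i) q I)"
    using assms(1) unfolding Ddiff_alt by blast
  obtain n2 :: nat and c2 U2 p2 w2 where 2: "\<forall>i<n2. length (U2 i) = j \<and> length (w2 i) = k"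
    "D2 = (\<lambda>q I. \<Sum>i<n2. c2 i * gen (U2 i) (p2 i) (w2 i) q I)"
    using assms(2) unfolding Ddiff_alt by blast
  define c where "c i = (if i < n1 then c1 i else c2 (i - n1))" for i
  define U where "U i = (if i < n1 then U1 i else U2 (i - n1))" for i
  define p where "p i = (if i < n1 then p1 i else p2 (i - n1))" for i
  define w where "w i = (if i < n1 then w1 i else w2 (i - n1))" for i
  have "\<forall>i<n1+n2. length (U i) = j \<and> length (w i) = k" using 1 2 by (auto simp: w_def U_def)
  moreover have "cadd D1 D2 = (\<lambda>q I. \<Sum>i<n1+n2. c i * gen (U i) (p i) (w i) q I)"
  proof (intro ext)
    fix q I
    have "(\<Sum>i<n1+n2. c i * gen (U i) (p i) (w i) q I) = (\<Sum>i<n1+n2. (if i < n1 then c1 i * gen (U1 i) (p1 i) (w1 i) q I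
        else c2 (i - n1) * gen (U2 (i - n1)) (p2 (i - n1)) (w2 (i - n1)) q I))"
      by (rule sum.cong[OF refl]) (simp add: c_def U_def p_def w_def)
    also have "\<dots> = (\<Sum>i<n1. c1 i * gen (U1 i) (p1 i) (w1 i) q I) + (\<Sum>i<n2. c2 i * gen (U2 i) (p2 i) (w2 i) q I)"
      by (rule sum_concat)
    finally show "cadd D1 D2 q I = (\<Sum>i<n1+n2. c i * gen (U i) (p i) (w i) q I)"
      using 1 2 by (simp add: cadd_def)
  qed
  ultimately show ?thesis unfolding Ddiff_alt
    by (intro CollectI exI[of _ "n1+n2"] exI[of _ c] exI[of _ U] exI[of _ p] exI[of _ w] conjI)
qed

lemma Ddiff_scale: assumes "D \<in> Ddiff k j" shows "cscale t D \<in> Ddiff k j"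
proof -
  obtain n :: nat and c U p w where 1: "\<forall>i<n. length (U i) = j \<and> length (w i) = k"
    "D = (\<lambda>q I. \<Sum>i<n. c i * gen (U i) (p i) (w i) q I)"
    using assms unfolding Ddiff_alt by blast
  have "cscale t D = (\<lambda>q I. \<Sum>i<n. (t * c i) * gen (U i) (p i) (w i) q I)"
    using 1 by (simp add: cscale_def sum_distrib_left mult.assoc)
  then show ?thesis using 1 unfolding Ddiff_alt
    by (intro CollectI exI[of _ n] exI[of _ "\<lambda>i. t * c i"] exI[of _ U] exI[of _ p] exI[of _ w] conjI)
qed

lemma Ddiff_gen: "length U = j \<Longrightarrow> length w = k \<Longrightarrow> gen U p w \<in> Ddiff k j"
  unfolding Ddiff_alt
  by (intro CollectI exI[of _ 1] exI[of _ "\<lambda>_. 1"] exI[of _ "\<lambda>_. U"] exI[of _ "\<lambda>_. p"] exI[of _ "\<lambda>_. w"] conjI) auto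

lemma Ddiff_sum: assumes "finite A" "\<And>i. i \<in> A \<Longrightarrow> f i \<in> Ddiff k j"
  shows "(\<lambda>q I. \<Sum>i\<in>A. f i q I) \<in> Ddiff k j"
  using assms
proof (induction A rule: finite_induct)
  case empty then show ?case using Ddiff_zero by simp
next
  case (insert x F)
  have "(\<lambda>q I. \<Sum>i\<in>insert x F. f i q I) = cadd (f x) (\<lambda>q I. \<Sum>i\<in>F. f i q I)"
    using insert.hyps by (simp add: cadd_def)
  moreover have "f x \<in> Ddiff k j" using insert.prems by simp
  moreover have "(\<lambda>q I. \<Sum>i\<in>F. f i q I) \<in> Ddiff k j" using insert.IH insert.prems by simp
  ultimately show ?case using Ddiff_add by metis
qed

lemma chains_Ddiff0: assumes "P \<in> chains k" shows "P \<in> Ddiff k 0"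
proof -
  have eq: "P = (\<lambda>q I. \<Sum>p\<in>supp P. mono p (P p) q I)"
  proof (intro ext)
    fix q I
    show "P q I = (\<Sum>p\<in>supp P. mono p (P p) q I)"
    proof (cases "q \<in> supp P")
      case True
      have "(\<Sum>p\<in>supp P. mono p (P p) q I) = (\<Sum>p\<in>supp P. if p = q then P q I else 0)"
        by (intro sum.cong refl) (auto simp: mono_def)
      also have "\<dots> = P q I" using True chainsD(1)[OF assms] by simp
      finally show ?thesis by simp
    next
      case False
      then have "P q = (\<lambda>_. 0)" by (simp add: supp_def)
      moreover have "(\<Sum>p\<in>supp P. mono p (P p) q I) = 0"
        using False by (intro sum.neutral) (auto simp: mono_def)
      ultimately show ?thesis by simp
    qed
  qed
  have "mono p (P p) \<in> Ddiff k 0" for p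
  proof -
    obtain n :: nat and c w where 1: "\<forall>i<n. length (w i) = k" "P p = (\<lambda>I. \<Sum>i<n. c i * wedge (w i) I)"
      using chainsD(2)[OF assms, of p] unfolding kvectors_def by blast
    have "mono p (P p) = (\<lambda>q I. \<Sum>i<n. c i * gen [] p (w i) q I)"
      using 1 by (auto simp: mono_def gen_def fun_eq_iff)
    then show ?thesis unfolding Ddiff_alt using 1
      by (intro CollectI exI[of _ n] exI[of _ c] exI[of _ "\<lambda>_. []"] exI[of _ "\<lambda>_. p"] exI[of _ w] conjI) auto
  qed
  then have "(\<lambda>q I. \<Sum>p\<in>supp P. mono p (P p) q I) \<in> Ddiff k 0"
    using chainsD(1)[OF assms] by (intro Ddiff_sum) auto
  then show ?thesis using eq by simp
qed

lemma Ddiff_eval: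
  fixes n :: nat
  assumes "kform k \<Omega>" "\<forall>i<n. length (U i) = j \<and> length (w i) = k"
  shows "\<Omega> (\<lambda>q I. \<Sum>i<n. c i * gen (U i) (p i) (w i) q I) = (\<Sum>i<n. c i * \<Omega> (gen (U i) (p i) (w i)))"
  using assms by (intro kform_lincomb) (auto intro: chains_gen)



lemma formnorm_leI:
  assumes "\<And>U p w. length U = j \<Longrightarrow> length w = k \<Longrightarrow> prod_list (map norm U) * mass w = 1 \<Longrightarrow>
     ennreal \<bar>\<Omega> (gen U p w)\<bar> \<le> B"
  shows "formnorm k j \<Omega> \<le> B"
  unfolding formnorm_def by (rule Sup_least) (use assms in \<open>auto simp: gen_def\<close>)

lemma Dnorm_nonneg: "0 \<le> Dnorm k j D"
  unfolding Dnorm_def by (rule Sup_upper) simp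

lemma Dnorm_ratio:
  assumes "kform k \<Omega>" "0 < formnorm k j \<Omega>" "formnorm k j \<Omega> < Orderings.top"
  shows "ereal (\<Omega> D / enn2real (formnorm k j \<Omega>)) \<le> Dnorm k j D"
  unfolding Dnorm_def by (rule Sup_upper) (use assms in blast)

lemma Dnorm_leI:
  assumes "0 \<le> B" "\<And>\<Omega>. kform k \<Omega> \<Longrightarrow> 0 < formnorm k j \<Omega> \<Longrightarrow> formnorm k j \<Omega> < Orderings.top \<Longrightarrow>
      ereal (\<Omega> D / enn2real (formnorm k j \<Omega>)) \<le> B"
  shows "Dnorm k j D \<le> B"
  unfolding Dnorm_def by (rule Sup_least) (use assms in auto)

lemma Dnorm_zero: "Dnorm k j (\<lambda>_ _. 0) = 0"
  by (intro antisym Dnorm_leI Dnorm_nonneg) (simp_all add: kform_zero)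

lemma Dnorm_add:
  assumes "D1 \<in> chains k" "D2 \<in> chains k"
  shows "Dnorm k j (cadd D1 D2) \<le> Dnorm k j D1 + Dnorm k j D2"
proof (rule Dnorm_leI)
  show "0 \<le> Dnorm k j D1 + Dnorm k j D2" by (rule add_nonneg_nonneg[OF Dnorm_nonneg Dnorm_nonneg])
  fix \<Omega> :: "'a chain \<Rightarrow> real" assume a: "kform k \<Omega>" "0 < formnorm k j \<Omega>" "formnorm k j \<Omega> < Orderings.top"
  let ?F = "enn2real (formnorm k j \<Omega>)"
  have "ereal (\<Omega> (cadd D1 D2) / ?F) = ereal (\<Omega> D1 / ?F) + ereal (\<Omega> D2 / ?F)"
    using kform_add[OF a(1) assms] by (simp add: add_divide_distrib)
  also have "\<dots> \<le> Dnorm k j D1 + Dnorm k j D2"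
    using Dnorm_ratio[OF a] by (intro add_mono)
  finally show "ereal (\<Omega> (cadd D1 D2) / ?F) \<le> Dnorm k j D1 + Dnorm k j D2" .
qed

lemma Dnorm_scale:
  assumes "D \<in> chains k" "0 \<le> t"
  shows "Dnorm k j (cscale t D) \<le> ereal t * Dnorm k j D"
proof (rule Dnorm_leI)
  show "0 \<le> ereal t * Dnorm k j D" using Dnorm_nonneg[of k j D] assms(2) by (cases "Dnorm k j D") auto
  fix \<Omega> :: "'a chain \<Rightarrow> real" assume a: "kform k \<Omega>" "0 < formnorm k j \<Omega>" "formnorm k j \<Omega> < Orderings.top"
  let ?F = "enn2real (formnorm k j \<Omega>)"
  have "ereal (\<Omega> (cscale t D) / ?F) = ereal t * ereal (\<Omega> D / ?F)"
    using kform_scale[OF a(1) assms(1)] by simp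
  also have "\<dots> \<le> ereal t * Dnorm k j D"
    using Dnorm_ratio[OF a] assms(2) by (intro ereal_mult_left_mono) auto
  finally show "ereal (\<Omega> (cscale t D) / ?F) \<le> ereal t * Dnorm k j D" .
qed

lemma ennreal_le_bound:
  assumes "ennreal a \<le> ennreal m * F" "F < Orderings.top" "0 \<le> m"
  shows "a \<le> m * enn2real F"
proof (cases "a \<ge> 0")
  case True
  have "enn2real (ennreal a) \<le> enn2real (ennreal m * F)"
    using assms by (intro enn2real_mono) (auto simp: ennreal_mult_less_top)
  then show ?thesis using True assms(3) by (simp add: enn2real_mult)
next
  case False
  have "0 \<le> m * enn2real F" using assms(3) by simp
  then show ?thesis using False by linarith
qed

lemma Dnorm_gen_le1:
  assumes "length U = j" "length w = k" "prod_list (map norm U) * mass w = 1" "\<bar>s\<bar> \<le> 1"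
  shows "Dnorm k j (cscale s (gen U p w)) \<le> 1"
proof (rule Dnorm_leI)
  fix \<Omega> :: "'a chain \<Rightarrow> real" assume a: "kform k \<Omega>" "0 < formnorm k j \<Omega>" "formnorm k j \<Omega> < Orderings.top"
  let ?F = "enn2real (formnorm k j \<Omega>)"
  have Fpos: "?F > 0" using a by (simp add: enn2real_positive_iff)
  have "\<bar>\<Omega> (gen U p w)\<bar> \<le> 1 * ?F"
    using formnorm_ge[OF assms(1-3), of \<Omega> p] a(3) by (intro ennreal_le_bound) auto
  moreover have "\<bar>s\<bar> * \<bar>\<Omega> (gen U p w)\<bar> \<le> \<bar>\<Omega> (gen U p w)\<bar>"
    using assms(4) by (intro mult_left_le_one_le) auto
  ultimately have "\<bar>s * \<Omega> (gen U p w)\<bar> \<le> ?F"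
    by (simp add: abs_mult)
  then have "s * \<Omega> (gen U p w) / ?F \<le> 1" using Fpos by (simp add: divide_le_eq_1)
  then show "ereal (\<Omega> (cscale s (gen U p w)) / ?F) \<le> 1"
    using kform_scale[OF a(1) chains_gen[OF assms(2)]] by simp
qed simp

lemma Dnorm0_fin:
  assumes "Q \<in> chains k"
  shows "Dnorm k 0 Q \<noteq> \<infinity>"
proof -
  obtain n :: nat and c U p w where 1: "\<forall>i<n. length (U i) = 0 \<and> length (w i) = k"
    "Q = (\<lambda>q I. \<Sum>i<n. c i * gen (U i) (p i) (w i) q I)"
    using chains_Ddiff0[OF assms] unfolding Ddiff_alt by blast
  define B where "B = (\<Sum>i<n. \<bar>c i\<bar> * mass (w i))"
  have B0: "0 \<le> B" unfolding B_def by (intro sum_nonneg mult_nonneg_nonneg mass_nonneg) auto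
  have "Dnorm k 0 Q \<le> ereal B"
  proof (rule Dnorm_leI)
    show "0 \<le> ereal B" using B0 by simp
    fix \<Omega> :: "'a chain \<Rightarrow> real" assume a: "kform k \<Omega>" "0 < formnorm k 0 \<Omega>" "formnorm k 0 \<Omega> < Orderings.top"
    let ?F = "enn2real (formnorm k 0 \<Omega>)"
    have Fpos: "?F > 0" using a by (simp add: enn2real_positive_iff)
    have b: "\<bar>\<Omega> (gen (U i) (p i) (w i))\<bar> \<le> mass (w i) * ?F" if "i < n" for i
    proof -
      have "U i = []" using 1 that by simp
      then show ?thesis using formnorm_bound0[OF a(1), of "w i" "p i"] 1 that a(3) mass_nonneg
        by (intro ennreal_le_bound) auto
    qed
    have "\<Omega> Q = (\<Sum>i<n. c i * \<Omega> (gen (U i) (p i) (w i)))"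
      using 1 Ddiff_eval[OF a(1) 1(1)] by simp
    also have "\<dots> \<le> (\<Sum>i<n. \<bar>c i\<bar> * (mass (w i) * ?F))"
    proof (intro sum_mono)
      fix i assume "i \<in> {..<n}"
      then have "\<bar>\<Omega> (gen (U i) (p i) (w i))\<bar> \<le> mass (w i) * ?F" using b by simp
      then have "\<bar>c i\<bar> * \<bar>\<Omega> (gen (U i) (p i) (w i))\<bar> \<le> \<bar>c i\<bar> * (mass (w i) * ?F)"
        by (intro mult_left_mono) auto
      moreover have "c i * \<Omega> (gen (U i) (p i) (w i)) \<le> \<bar>c i\<bar> * \<bar>\<Omega> (gen (U i) (p i) (w i))\<bar>"
        by (metis abs_ge_self abs_mult)
      ultimately show "c i * \<Omega> (gen (U i) (p i) (w i)) \<le> \<bar>c i\<bar> * (mass (w i) * ?F)"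
        by linarith
    qed
    also have "\<dots> = B * ?F" unfolding B_def by (simp add: sum_distrib_right mult.assoc)
    finally show "ereal (\<Omega> Q / ?F) \<le> ereal B" using Fpos by (simp add: divide_le_eq)
  qed
  then show ?thesis by auto
qed

lemma delta_inj:
  assumes "P \<in> chains k" "u \<noteq> 0" "delta u P = (\<lambda>_ _. 0)"
  shows "P = (\<lambda>_ _. 0)"
proof (rule ccontr)
  assume "P \<noteq> (\<lambda>_ _. 0)"
  then obtain q0 I0 where q0: "P q0 I0 \<noteq> 0" by (auto simp: fun_eq_iff)
  have step: "P (q - u) I = P q I" for q I
    using assms(3) by (simp add: delta_def transl_def fun_eq_iff)
  have hm: "P (q0 - real m *\<^sub>R u) I0 = P q0 I0" for m
  proof (induction m)
    case (Suc m)
    have "q0 - real (Suc m) *\<^sub>R u = (q0 - real m *\<^sub>R u) - u" by (simp add: algebra_simps)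
    then show ?case using Suc step by metis
  qed simp
  then have "range (\<lambda>m. q0 - real m *\<^sub>R u) \<subseteq> supp P"
    using q0 hm by (auto simp: supp_def fun_eq_iff intro!: exI[of _ I0])
  moreover have "inj (\<lambda>m. q0 - real m *\<^sub>R u)"
    using assms(2) by (auto simp: inj_def scaleR_cancel_right)
  ultimately have "infinite (supp P)"
    by (meson finite_imageD finite_subset infinite_UNIV_nat)
  then show False using chainsD(1)[OF assms(1)] by simp
qed

lemma deltas_bound:
  assumes "\<And>q I. \<bar>P q I\<bar> \<le> B"
  shows "\<bar>deltas U P q I\<bar> \<le> 2 ^ length U * B"
proof (induction U arbitrary: q)
  case Nil then show ?case using assms by simp
next
  case (Cons u U)
  have "\<bar>deltas (u # U) P q I\<bar> \<le> \<bar>deltas U P (q - u) I\<bar> + \<bar>deltas U P q I\<bar>"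
    by (simp add: delta_def transl_def)
  also have "\<dots> \<le> 2 ^ length (u # U) * B" using Cons[of "q - u"] Cons[of q] by simp
  finally show ?case .
qed

lemma wedge_Nil_bound: "\<bar>wedge [] I\<bar> \<le> 1"
  by (simp add: wedge_def detk0)

lemma formnorm0_zero_Dnorm_inf:
  assumes "kform 0 \<Omega>" "formnorm 0 j \<Omega> = 0" "D \<in> Ddiff 0 j" "\<Omega> D > 0"
  shows "Dnorm 0 j D = \<infinity>"
proof -
  obtain e :: 'a where e: "e \<in> Basis" using nonempty_Basis by blast
  define U0 where "U0 = replicate j e"
  have ne: "deltas U (mono 0 (wedge [])) \<noteq> (\<lambda>_ _. 0)" if "set U \<subseteq> {e}" for U
    using that
  proof (induction U)
    case Nil
    have 1: "mono (0::'a) (wedge []) 0 [] = 1" by (simp add: mono_def wedge_def detk0)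
    show ?case
    proof
      assume h: "deltas [] (mono (0::'a) (wedge [])) = (\<lambda>_ _. 0)"
      have "mono (0::'a) (wedge []) = (\<lambda>_ _. 0)" using h by simp
      then have "mono (0::'a) (wedge []) 0 [] = 0" by simp
      then show False using 1 by simp
    qed
  next
    case (Cons u U)
    then have u: "u = e" "set U \<subseteq> {e}" by auto
    have "u \<noteq> 0" using u e by auto
    moreover have "deltas U (mono 0 (wedge [])) \<in> chains 0"
      by (intro chains_deltas chains_mono wedge_kv) simp
    ultimately show ?case using delta_inj Cons.IH[OF u(2)] by (metis deltas_Cons)
  qed
  have lU0: "length U0 = j" and nU0: "prod_list (map norm U0) * mass [] = 1"
    using e by (auto simp: U0_def mass_Nil prod_list_replicate)
  have "set U0 \<subseteq> {e}" by (auto simp: U0_def)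
  then have "gen U0 0 [] \<noteq> (\<lambda>_ _. 0)" using ne[of U0] by (simp add: gen_def)
  then obtain q0 I0 where q0: "gen U0 0 [] q0 I0 \<noteq> 0"
    by (auto simp: fun_eq_iff)
  define \<Psi> where "\<Psi> X = X q0 I0" for X :: "'a chain"
  have kill: "\<Omega> (gen U p w) = 0" if "length U = j" "length w = 0" "prod_list (map norm U) * mass w = 1" for U :: "'a list" and p w
    using formnorm_ge[OF that, of \<Omega> p] assms(2) by simp
  have bnd: "\<bar>\<Psi> (gen U p w)\<bar> \<le> 2 ^ j" if "length U = j" "length w = 0" for U :: "'a list" and p w
  proof -
    have "\<bar>mono p (wedge w) q I\<bar> \<le> 1" for q I
      using that wedge_Nil_bound by (auto simp: mono_def)
    from deltas_bound[of "mono p (wedge w)" 1 U q0 I0, OF this] that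
    show ?thesis by (simp add: \<Psi>_def gen_def)
  qed
  let ?r = "\<Omega> D"
  show ?thesis
  proof (rule ereal_top)
    fix M :: real
    define \<delta> where "\<delta> = ?r / (2 * (\<bar>\<Psi> D\<bar> + 2 ^ j * (\<bar>M\<bar> + 1)))"
    have den: "0 < 2 * (\<bar>\<Psi> D\<bar> + 2 ^ j * (\<bar>M\<bar> + 1))" by (simp add: add_nonneg_pos)
    have dpos: "\<delta> > 0" unfolding \<delta>_def using assms(4) den by simp
    have dd: "\<delta> * (\<bar>\<Psi> D\<bar> + 2 ^ j * (\<bar>M\<bar> + 1)) = ?r / 2"
      unfolding \<delta>_def using den by (simp add: field_simps)
    define \<Omega>' where "\<Omega>' X = \<Omega> X + \<delta> * \<Psi> X" for X
    have k': "kform 0 \<Omega>'"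
      using assms(1) unfolding kform_def \<Omega>'_def \<Psi>_def by (simp add: cadd_def cscale_def algebra_simps)
    have up: "formnorm 0 j \<Omega>' \<le> ennreal (\<delta> * 2 ^ j)"
    proof (rule formnorm_leI)
      fix U :: "'a list" and p :: 'a and w :: "'a list" assume u: "length U = j" "length w = 0" "prod_list (map norm U) * mass w = 1"
      have "\<bar>\<Omega>' (gen U p w)\<bar> = \<delta> * \<bar>\<Psi> (gen U p w)\<bar>"
        using kill[OF u] dpos by (simp add: \<Omega>'_def abs_mult)
      also have "\<dots> \<le> \<delta> * 2 ^ j" using bnd[OF u(1,2)] dpos by simp
      finally show "ennreal \<bar>\<Omega>' (gen U p w)\<bar> \<le> ennreal (\<delta> * 2 ^ j)"
        by (simp add: ennreal_leI)
    qed
    have low: "ennreal (\<delta> * \<bar>\<Psi> (gen U0 0 [])\<bar>) \<le> formnorm 0 j \<Omega>'"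
    proof -
      have "ennreal \<bar>\<Omega>' (gen U0 0 [])\<bar> \<le> formnorm 0 j \<Omega>'"
        by (rule formnorm_ge[OF lU0 _ nU0]) simp
      moreover have "\<bar>\<Omega>' (gen U0 0 [])\<bar> = \<delta> * \<bar>\<Psi> (gen U0 0 [])\<bar>"
        using kill[OF lU0 _ nU0] dpos by (simp add: \<Omega>'_def abs_mult)
      ultimately show ?thesis by simp
    qed
    have psi0: "\<bar>\<Psi> (gen U0 0 [])\<bar> > 0" using q0 by (simp add: \<Psi>_def)
    have Fpos: "0 < formnorm 0 j \<Omega>'"
      using low dpos psi0 by (metis ennreal_less_zero_iff less_le_trans mult_pos_pos)
    have Ftop: "formnorm 0 j \<Omega>' < Orderings.top" using up by (simp add: le_less_trans)
    let ?F = "enn2real (formnorm 0 j \<Omega>')"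
    have F0: "?F > 0" using Fpos Ftop by (simp add: enn2real_positive_iff)
    have F1: "?F \<le> \<delta> * 2 ^ j"
      using enn2real_mono[OF up] dpos by simp
    have num: "\<Omega>' D \<ge> ?r / 2"
    proof -
      have "\<delta> * \<bar>\<Psi> D\<bar> \<le> ?r / 2"
      proof -
        have "\<delta> * \<bar>\<Psi> D\<bar> \<le> \<delta> * (\<bar>\<Psi> D\<bar> + 2 ^ j * (\<bar>M\<bar> + 1))"
          using dpos by (intro mult_left_mono) auto
        also have "\<dots> = ?r / 2" by (rule dd)
        finally show ?thesis .
      qed
      moreover have "\<delta> * (- \<bar>\<Psi> D\<bar>) \<le> \<delta> * \<Psi> D"
        using dpos by (intro mult_left_mono) auto
      ultimately show ?thesis unfolding \<Omega>'_def by simp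
    qed
    have key: "\<delta> * 2 ^ j * (\<bar>M\<bar> + 1) \<le> ?r / 2"
    proof -
      have "\<delta> * (2 ^ j * (\<bar>M\<bar> + 1)) \<le> \<delta> * (\<bar>\<Psi> D\<bar> + 2 ^ j * (\<bar>M\<bar> + 1))"
        using dpos by (intro mult_left_mono) auto
      also have "\<dots> = ?r / 2" by (rule dd)
      finally show ?thesis by (simp add: mult.assoc)
    qed
    have "M \<le> \<Omega>' D / ?F"
    proof -
      have "M * ?F \<le> (\<bar>M\<bar> + 1) * ?F"
        using F0 by (intro mult_right_mono) auto
      also have "\<dots> \<le> (\<bar>M\<bar> + 1) * (\<delta> * 2 ^ j)"
        using F1 by (intro mult_left_mono) auto
      also have "\<dots> \<le> ?r / 2" using key by (simp add: algebra_simps)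
      also have "\<dots> \<le> \<Omega>' D" using num .
      finally show ?thesis using F0 by (simp add: le_divide_eq)
    qed
    also have "ereal (\<Omega>' D / ?F) \<le> Dnorm 0 j D"
      by (rule Dnorm_ratio[OF k' Fpos Ftop])
    finally show "ereal M \<le> Dnorm 0 j D" by simp
  qed
qed



definition goodG :: "'a chain set \<Rightarrow> ('a chain \<Rightarrow> real) \<Rightarrow> 'a chain \<Rightarrow> ('a chain \<times> real) set \<Rightarrow> bool" where
  "goodG S p x0 G \<longleftrightarrow> (\<forall>x a. (x,a) \<in> G \<longrightarrow> x \<in> S) \<and> (\<forall>x a. (x,a) \<in> G \<longrightarrow> a \<le> p x) \<and>
     (\<forall>x a b. (x,a) \<in> G \<longrightarrow> (x,b) \<in> G \<longrightarrow> a = b) \<and>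
     (\<forall>x a y b. (x,a) \<in> G \<longrightarrow> (y,b) \<in> G \<longrightarrow> (cadd x y, a + b) \<in> G) \<and>
     (\<forall>x a t. (x,a) \<in> G \<longrightarrow> (cscale t x, t * a) \<in> G) \<and> (x0, p x0) \<in> G"

lemma goodG_S: "goodG S p x0 G \<Longrightarrow> (x,a) \<in> G \<Longrightarrow> x \<in> S" unfolding goodG_def by blast
lemma goodG_le: "goodG S p x0 G \<Longrightarrow> (x,a) \<in> G \<Longrightarrow> a \<le> p x" unfolding goodG_def by blast
lemma goodG_fun: "goodG S p x0 G \<Longrightarrow> (x,a) \<in> G \<Longrightarrow> (x,b) \<in> G \<Longrightarrow> a = b" unfolding goodG_def by blast
lemma goodG_add: "goodG S p x0 G \<Longrightarrow> (x,a) \<in> G \<Longrightarrow> (y,b) \<in> G \<Longrightarrow> (cadd x y, a + b) \<in> G"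
  unfolding goodG_def by blast
lemma goodG_scale: "goodG S p x0 G \<Longrightarrow> (x,a) \<in> G \<Longrightarrow> (cscale t x, t * a) \<in> G" unfolding goodG_def by blast
lemma goodG_x0: "goodG S p x0 G \<Longrightarrow> (x0, p x0) \<in> G" unfolding goodG_def by blast

lemma cscale_zero: "cscale 0 x = (\<lambda>_ _. 0)" by (simp add: cscale_def fun_eq_iff)
lemma cadd_zero: "cadd x (\<lambda>_ _. 0) = x" by (simp add: cadd_def fun_eq_iff)
lemma cscale_cscale: "cscale a (cscale b x) = cscale (a * b) x" by (simp add: cscale_def fun_eq_iff)
lemma cadd_cscale: "cadd (cscale a x) (cscale b x) = cscale (a + b) x"
  by (simp add: cscale_def cadd_def fun_eq_iff algebra_simps)
lemma cscale_one: "cscale 1 x = x" by (simp add: cscale_def fun_eq_iff)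

lemma HB:
  fixes p :: "'a chain \<Rightarrow> real" and S :: "'a chain set"
  assumes S0: "(\<lambda>_ _. 0) \<in> S" and Sadd: "\<And>x y. x \<in> S \<Longrightarrow> y \<in> S \<Longrightarrow> cadd x y \<in> S"
    and Sscale: "\<And>t x. x \<in> S \<Longrightarrow> cscale t x \<in> S"
    and sub: "\<And>x y. x \<in> S \<Longrightarrow> y \<in> S \<Longrightarrow> p (cadd x y) \<le> p x + p y"
    and hom: "\<And>t x. x \<in> S \<Longrightarrow> 0 < t \<Longrightarrow> p (cscale t x) = t * p x"
    and p0: "p (\<lambda>_ _. 0) = 0"
    and x0: "x0 \<in> S"
  shows "\<exists>f. (\<forall>x\<in>S. \<forall>y\<in>S. f (cadd x y) = f x + f y) \<and> (\<forall>t. \<forall>x\<in>S. f (cscale t x) = t * f x) \<and>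
     f x0 = p x0 \<and> (\<forall>x\<in>S. f x \<le> p x)"
proof -
  let ?A = "{G. goodG S p x0 G}"
  have neg: "- p x \<le> p (cscale (-1) x)" if "x \<in> S" for x
  proof -
    have "cadd x (cscale (-1) x) = (\<lambda>_ _. 0)" by (simp add: cadd_def cscale_def fun_eq_iff)
    moreover have "p (cadd x (cscale (-1) x)) \<le> p x + p (cscale (-1) x)"
      by (rule sub[OF that Sscale[OF that]])
    ultimately have "0 \<le> p x + p (cscale (-1) x)" using p0 by simp
    then show ?thesis by simp
  qed
  have pscale: "t * p x \<le> p (cscale t x)" if "x \<in> S" for t x
  proof (cases "t > 0")
    case True then show ?thesis using hom[OF that] by simp
  next
    case False
    show ?thesis
    proof (cases "t = 0")
      case True then show ?thesis using p0 by (simp add: cscale_zero)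
    next
      case False
      then have tn: "-t > 0" using \<open>\<not> t > 0\<close> by simp
      have "cscale t x = cscale (-t) (cscale (-1) x)" by (simp add: cscale_cscale)
      then have "p (cscale t x) = (-t) * p (cscale (-1) x)" using hom[OF Sscale[OF that] tn] by simp
      moreover have "(-t) * (- p x) \<le> (-t) * p (cscale (-1) x)"
        using neg[OF that] tn by (intro mult_left_mono) auto
      ultimately show ?thesis by simp
    qed
  qed
  define G0 where "G0 = {(cscale t x0, t * p x0) | t. True}"
  have G0: "goodG S p x0 G0"
    unfolding goodG_def
  proof (intro conjI allI impI)
    fix x a assume "(x, a) \<in> G0"
    then obtain t where "x = cscale t x0" "a = t * p x0" by (auto simp: G0_def)
    then show "x \<in> S" using Sscale[OF x0] by simp
  next
    fix x a assume "(x, a) \<in> G0"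
    then obtain t where "x = cscale t x0" "a = t * p x0" by (auto simp: G0_def)
    then show "a \<le> p x" using pscale[OF x0] by simp
  next
    fix x a b assume xa: "(x, a) \<in> G0" and xb: "(x, b) \<in> G0"
    obtain t where t: "x = cscale t x0" "a = t * p x0" using xa unfolding G0_def by blast
    obtain s where s: "x = cscale s x0" "b = s * p x0" using xb unfolding G0_def by blast
    note ts = t s
    show "a = b"
    proof (cases "x0 = (\<lambda>_ _. 0)")
      case True then show ?thesis using ts p0 by simp
    next
      case False
      then obtain q I where "x0 q I \<noteq> 0" by (auto simp: fun_eq_iff)
      moreover have "t * x0 q I = s * x0 q I" using ts(1,3) by (metis cscale_def)
      ultimately show ?thesis using ts by simp
    qed
  next
    fix x a y b assume xa: "(x, a) \<in> G0" and yb: "(y, b) \<in> G0"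
    obtain t where t: "x = cscale t x0" "a = t * p x0" using xa unfolding G0_def by blast
    obtain s where s: "y = cscale s x0" "b = s * p x0" using yb unfolding G0_def by blast
    from t s show "(cadd x y, a + b) \<in> G0" unfolding G0_def
      by (auto simp: cadd_cscale algebra_simps intro!: exI[of _ "t + s"])
  next
    fix x a t assume "(x, a) \<in> G0"
    then obtain s where "x = cscale s x0" "a = s * p x0" by (auto simp: G0_def)
    then show "(cscale t x, t * a) \<in> G0" unfolding G0_def
      by (auto simp: cscale_cscale intro!: exI[of _ "t * s"])
  next
    show "(x0, p x0) \<in> G0" unfolding G0_def using cscale_one[of x0] by (auto intro!: exI[of _ 1])
  qed
  have "\<exists>M\<in>?A. \<forall>X\<in>?A. M \<subseteq> X \<longrightarrow> X = M"
  proof (rule Zorn_Lemma2, intro ballI)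
    fix C assume C: "C \<in> Zorn.chains ?A"
    then have CA: "C \<subseteq> ?A" and Cch: "\<And>X Y. X \<in> C \<Longrightarrow> Y \<in> C \<Longrightarrow> X \<subseteq> Y \<or> Y \<subseteq> X"
      unfolding Zorn.chains_def chain_subset_def by auto
    show "\<exists>U\<in>?A. \<forall>X\<in>C. X \<subseteq> U"
    proof (cases "C = {}")
      case True then show ?thesis using G0 by auto
    next
      case False
      have "goodG S p x0 (\<Union>C)"
        unfolding goodG_def
      proof (intro conjI allI impI)
        fix x a assume "(x, a) \<in> \<Union>C"
        then obtain X where X: "X \<in> C" "(x,a) \<in> X" by blast
        then have "goodG S p x0 X" using CA by blast
        then show "x \<in> S" using X(2) by (rule goodG_S)
      next
        fix x a assume "(x, a) \<in> \<Union>C"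
        then obtain X where X: "X \<in> C" "(x,a) \<in> X" by blast
        then have "goodG S p x0 X" using CA by blast
        then show "a \<le> p x" using X(2) by (rule goodG_le)
      next
        fix x a b assume "(x, a) \<in> \<Union>C" "(x, b) \<in> \<Union>C"
        then obtain X Y where XY: "X \<in> C" "Y \<in> C" "(x,a) \<in> X" "(x,b) \<in> Y" by blast
        have gX: "goodG S p x0 X" and gY: "goodG S p x0 Y" using XY CA by blast+
        from Cch[OF XY(1,2)] show "a = b"
        proof
          assume "X \<subseteq> Y" then show ?thesis using goodG_fun[OF gY] XY by blast
        next
          assume "Y \<subseteq> X" then show ?thesis using goodG_fun[OF gX] XY by blast
        qed
      next
        fix x a y b assume "(x, a) \<in> \<Union>C" "(y, b) \<in> \<Union>C"
        then obtain X Y where XY: "X \<in> C" "Y \<in> C" "(x,a) \<in> X" "(y,b) \<in> Y" by blast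
        have gX: "goodG S p x0 X" and gY: "goodG S p x0 Y" using XY CA by blast+
        from Cch[OF XY(1,2)] show "(cadd x y, a + b) \<in> \<Union>C"
        proof
          assume "X \<subseteq> Y" then show ?thesis using goodG_add[OF gY] XY by blast
        next
          assume "Y \<subseteq> X" then show ?thesis using goodG_add[OF gX] XY by blast
        qed
      next
        fix x a t assume "(x, a) \<in> \<Union>C"
        then obtain X where X: "X \<in> C" "(x,a) \<in> X" by blast
        then have "goodG S p x0 X" using CA by blast
        then have "(cscale t x, t * a) \<in> X" using X(2) by (rule goodG_scale)
        then show "(cscale t x, t * a) \<in> \<Union>C" using X(1) by blast
      next
        obtain X where X: "X \<in> C" using False by blast
        then have "goodG S p x0 X" using CA by blast
        then have "(x0, p x0) \<in> X" by (rule goodG_x0)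
        then show "(x0, p x0) \<in> \<Union>C" using X by blast
      qed
      then show ?thesis by blast
    qed
  qed
  then obtain M where M: "goodG S p x0 M" and Mmax: "\<And>X. goodG S p x0 X \<Longrightarrow> M \<subseteq> X \<Longrightarrow> X = M"
    by blast
  note MS = goodG_S[OF M] and Mle = goodG_le[OF M] and Mfun = goodG_fun[OF M]
    and Madd = goodG_add[OF M] and Msc = goodG_scale[OF M] and Mx0 = goodG_x0[OF M]
  have Mz: "((\<lambda>_ _. 0), 0) \<in> M" using Msc[OF Mx0, of 0] cscale_zero[of x0] by simp
  have dom: "\<exists>a. (y, a) \<in> M" if yS: "y \<in> S" for y
  proof (rule ccontr)
    assume ny: "\<not> (\<exists>a. (y, a) \<in> M)"
    let ?m = "\<lambda>x. cadd x (cscale (-1) y)"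
    define L where "L = {a - p (?m x) | x a. (x, a) \<in> M}"
    have Lne: "L \<noteq> {}" using Mz unfolding L_def by blast
    have Lub: "l \<le> p (cadd z y) - b" if "l \<in> L" "(z, b) \<in> M" for l z b
    proof -
      obtain x a where xa: "l = a - p (?m x)" "(x, a) \<in> M" using \<open>l \<in> L\<close> unfolding L_def by blast
      have xS: "x \<in> S" and zS: "z \<in> S" using xa(2) that(2) MS by blast+
      have "(cadd x z, a + b) \<in> M" using Madd xa(2) that(2) by blast
      then have "a + b \<le> p (cadd x z)" using Mle by blast
      also have "cadd x z = cadd (?m x) (cadd z y)" by (simp add: cadd_def cscale_def fun_eq_iff)
      also have "p \<dots> \<le> p (?m x) + p (cadd z y)"
        using xS zS yS by (intro sub Sadd Sscale)
      finally show ?thesis using xa(1) by simp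
    qed
    have bdd: "bdd_above L" using Lub Mz by (auto simp: bdd_above_def)
    define c where "c = Sup L"
    have c_ge: "a - p (?m x) \<le> c" if "(x, a) \<in> M" for x a
      unfolding c_def using that bdd by (intro cSup_upper) (auto simp: L_def)
    have c_le: "c \<le> p (cadd z y) - b" if "(z, b) \<in> M" for z b
      unfolding c_def using Lne Lub[OF _ that] by (intro cSup_least) auto
    define M' where "M' = {(cadd x (cscale t y), a + t * c) | x a t. (x, a) \<in> M}"
    have "goodG S p x0 M'"
      unfolding goodG_def
    proof (intro conjI allI impI)
      fix z v assume "(z, v) \<in> M'"
      then obtain x a t where z: "z = cadd x (cscale t y)" "v = a + t * c" "(x, a) \<in> M"
        unfolding M'_def by blast
      have xS: "x \<in> S" using z(3) MS by blast
      show "z \<in> S" using z xS yS by (simp add: Sadd Sscale)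
    next
      fix z v assume "(z, v) \<in> M'"
      then obtain x a t where z: "z = cadd x (cscale t y)" "v = a + t * c" "(x, a) \<in> M"
        unfolding M'_def by blast
      have xS: "x \<in> S" using z(3) MS by blast
      show "v \<le> p z"
        proof (cases "t = 0")
          case True
          then show ?thesis using z Mle[OF z(3)] by (simp add: cscale_zero cadd_zero)
        next
          case False
          show ?thesis
          proof (cases "t > 0")
            case True
            have m: "(cscale (1/t) x, (1/t) * a) \<in> M" using Msc z(3) by blast
            have "c \<le> p (cadd (cscale (1/t) x) y) - (1/t) * a" by (rule c_le[OF m])
            then have "t * c \<le> t * p (cadd (cscale (1/t) x) y) - a"
              using True by (simp add: right_diff_distrib mult_left_mono[of _ _ t, OF _ less_imp_le] field_simps)
            also have "t * p (cadd (cscale (1/t) x) y) = p (cscale t (cadd (cscale (1/t) x) y))"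
              using True xS yS by (simp add: hom Sadd Sscale)
            also have "cscale t (cadd (cscale (1/t) x) y) = z"
              using True z(1) by (simp add: cscale_def cadd_def fun_eq_iff algebra_simps)
            finally show ?thesis using z(2) by simp
          next
            case False
            then have s: "-t > 0" using \<open>t \<noteq> 0\<close> by simp
            have m: "(cscale (1/(-t)) x, (1/(-t)) * a) \<in> M" using Msc z(3) by blast
            have "(1/(-t)) * a - p (?m (cscale (1/(-t)) x)) \<le> c" by (rule c_ge[OF m])
            then have "a - (-t) * p (?m (cscale (1/(-t)) x)) \<le> (-t) * c"
              using s by (simp add: field_simps)
            also have "(-t) * p (?m (cscale (1/(-t)) x)) = p (cscale (-t) (?m (cscale (1/(-t)) x)))"
              using s xS yS by (simp add: hom Sadd Sscale)
            also have "cscale (-t) (?m (cscale (1/(-t)) x)) = z"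
              using s z(1) by (simp add: cscale_def cadd_def fun_eq_iff algebra_simps)
            finally show ?thesis using z(2) by simp
          qed
        qed
    next
      fix z v v' assume "(z, v) \<in> M'" "(z, v') \<in> M'"
      then obtain x a t x' a' t' where z: "z = cadd x (cscale t y)" "v = a + t * c" "(x, a) \<in> M"
        "z = cadd x' (cscale t' y)" "v' = a' + t' * c" "(x', a') \<in> M"
        unfolding M'_def by blast
      show "v = v'"
      proof (cases "t = t'")
        case True
        then have "x = x'" using z(1,4) by (simp add: cadd_def cscale_def fun_eq_iff)
        then show ?thesis using z True Mfun by blast
      next
        case False
        have "(cadd x' (cscale (-1) x), a' + (-1) * a) \<in> M" using z(3,6) Madd Msc by blast
        then have "(cscale (1 / (t - t')) (cadd x' (cscale (-1) x)), (1 / (t - t')) * (a' + (-1) * a)) \<in> M"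
          using Msc by blast
        moreover have "cscale (1 / (t - t')) (cadd x' (cscale (-1) x)) = y"
        proof -
          have "x q I + t * y q I = x' q I + t' * y q I" for q I
            using z(1,4) by (metis cadd_def cscale_def)
          then show ?thesis using False by (simp add: cscale_def cadd_def fun_eq_iff field_simps)
        qed
        ultimately show ?thesis using ny by auto
      qed
    next
      fix z v w u assume "(z, v) \<in> M'" "(w, u) \<in> M'"
      then obtain x a t x' a' t' where z: "z = cadd x (cscale t y)" "v = a + t * c" "(x, a) \<in> M"
        "w = cadd x' (cscale t' y)" "u = a' + t' * c" "(x', a') \<in> M"
        unfolding M'_def by blast
      have "(cadd x x', a + a') \<in> M" using z Madd by blast
      moreover have "cadd z w = cadd (cadd x x') (cscale (t + t') y)"
        using z by (simp add: cadd_def cscale_def fun_eq_iff algebra_simps)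
      moreover have "v + u = (a + a') + (t + t') * c" using z by (simp add: algebra_simps)
      ultimately show "(cadd z w, v + u) \<in> M'" unfolding M'_def by blast
    next
      fix z v r assume "(z, v) \<in> M'"
      then obtain x a t where z: "z = cadd x (cscale t y)" "v = a + t * c" "(x, a) \<in> M"
        unfolding M'_def by blast
      have "(cscale r x, r * a) \<in> M" using z Msc by blast
      moreover have "cscale r z = cadd (cscale r x) (cscale (r * t) y)"
        using z by (simp add: cadd_def cscale_def fun_eq_iff algebra_simps)
      moreover have "r * v = r * a + (r * t) * c" using z by (simp add: algebra_simps)
      ultimately show "(cscale r z, r * v) \<in> M'" unfolding M'_def by blast
    next
      have "(x0, p x0) \<in> M" using Mx0 by blast
      moreover have "cadd x0 (cscale 0 y) = x0" by (simp add: cscale_zero cadd_zero)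
      ultimately show "(x0, p x0) \<in> M'" unfolding M'_def by force
    qed
    moreover have "M \<subseteq> M'"
    proof
      fix z assume "z \<in> M"
      then obtain x a where "z = (x, a)" "(x, a) \<in> M" by (cases z) auto
      moreover have "cadd x (cscale 0 y) = x" by (simp add: cscale_zero cadd_zero)
      ultimately show "z \<in> M'" unfolding M'_def by force
    qed
    ultimately have "M' = M" using Mmax by blast
    moreover have "(y, c) \<in> M'"
    proof -
      have "cadd (\<lambda>_ _. 0) (cscale 1 y) = y" by (simp add: cadd_def cscale_def fun_eq_iff)
      then show ?thesis using Mz unfolding M'_def by force
    qed
    ultimately show False using ny by blast
  qed
  define f where "f x = (THE a. (x, a) \<in> M)" for x
  have fM: "(x, f x) \<in> M" if xS: "x \<in> S" for x
  proof -
    obtain a where a: "(x, a) \<in> M" using dom[OF xS] by blast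
    have "f x = a" unfolding f_def using a Mfun by (intro the_equality) blast+
    then show ?thesis using a by simp
  qed
  have fval: "f x = a" if "(x, a) \<in> M" for x a
    unfolding f_def using that Mfun by (intro the_equality) blast+
  show ?thesis
  proof (intro exI[of _ f] conjI ballI allI)
    fix x y assume "x \<in> S" "y \<in> S"
    then show "f (cadd x y) = f x + f y" using fM Madd fval by blast
  next
    fix t x assume "x \<in> S"
    then show "f (cscale t x) = t * f x" using fM Msc fval by blast
  next
    show "f x0 = p x0" using Mx0 fval by blast
  next
    fix x assume "x \<in> S"
    then show "f x \<le> p x" using fM Mle by blast
  qed
qed



definition decs :: "nat \<Rightarrow> nat \<Rightarrow> 'a::euclidean_space chain \<Rightarrow> (nat \<Rightarrow> 'a chain) set" where
  "decs k r Q = {D. (\<forall>j\<le>r. D j \<in> Ddiff k j) \<and> Q = (\<lambda>q I. \<Sum>j\<le>r. D j q I)}"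

definition cost :: "nat \<Rightarrow> nat \<Rightarrow> (nat \<Rightarrow> 'a::euclidean_space chain) \<Rightarrow> ereal" where
  "cost k r D = (\<Sum>j\<le>r. Dnorm k j (D j))"

definition NN :: "nat \<Rightarrow> nat \<Rightarrow> 'a::euclidean_space chain \<Rightarrow> ereal" where
  "NN k r Q = (INF D \<in> decs k r Q. cost k r D)"

lemma cost_nonneg: "0 \<le> cost k r D"
  unfolding cost_def by (intro sum_nonneg) (simp add: Dnorm_nonneg)

lemma NN_nonneg: "0 \<le> NN k r Q"
  unfolding NN_def by (intro INF_greatest cost_nonneg)

lemma NN_le: "D \<in> decs k r Q \<Longrightarrow> NN k r Q \<le> cost k r D"
  unfolding NN_def by (rule INF_lower)

lemma single_dec:
  assumes "j0 \<le> r" "X \<in> Ddiff k j0"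
  shows "(\<lambda>j. if j = j0 then X else (\<lambda>_ _. 0)) \<in> decs k r X"
    and "cost k r (\<lambda>j. if j = j0 then X else (\<lambda>_ _. 0)) = Dnorm k j0 X"
proof -
  have "X q I = (\<Sum>j\<le>r. (if j = j0 then X else (\<lambda>_ _. 0)) q I)" for q I
  proof -
    have "(\<Sum>j\<le>r. (if j = j0 then X else (\<lambda>_ _. 0)) q I) = (\<Sum>j\<le>r. if j = j0 then X q I else 0)"
      by (intro sum.cong) auto
    also have "\<dots> = X q I" using assms(1) by simp
    finally show ?thesis by simp
  qed
  then show "(\<lambda>j. if j = j0 then X else (\<lambda>_ _. 0)) \<in> decs k r X"
    unfolding decs_def using assms by (auto simp: Ddiff_zero)
  have "cost k r (\<lambda>j. if j = j0 then X else (\<lambda>_ _. 0)) = (\<Sum>j\<le>r. if j = j0 then Dnorm k j0 X else 0)"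
    unfolding cost_def by (intro sum.cong refl) (simp add: Dnorm_zero)
  also have "\<dots> = Dnorm k j0 X" using assms(1) by simp
  finally show "cost k r (\<lambda>j. if j = j0 then X else (\<lambda>_ _. 0)) = Dnorm k j0 X" .
qed

lemma NN_fin: assumes "Q \<in> chains k" shows "NN k r Q \<noteq> \<infinity>"
proof -
  have "NN k r Q \<le> Dnorm k 0 Q"
    using single_dec[of 0 r Q k] chains_Ddiff0[OF assms] NN_le by fastforce
  then show ?thesis using Dnorm0_fin[OF assms] by auto
qed

lemma NN_gen:
  assumes "j \<le> r" "length U = j" "length w = k" "prod_list (map norm U) * mass w = 1" "\<bar>s\<bar> \<le> 1"
  shows "NN k r (cscale s (gen U p w)) \<le> 1"
proof -
  have X: "cscale s (gen U p w) \<in> Ddiff k j" using assms by (intro Ddiff_scale Ddiff_gen)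
  have "NN k r (cscale s (gen U p w)) \<le> Dnorm k j (cscale s (gen U p w))"
    using single_dec[OF assms(1) X] NN_le by metis
  also have "\<dots> \<le> 1" using Dnorm_gen_le1[OF assms(2-5)] .
  finally show ?thesis .
qed

lemma NN_zero: "NN k r (\<lambda>_ _. 0) = 0"
proof -
  let ?z = "(\<lambda>_ _. 0) :: 'a chain"
  have "(\<lambda>j. ?z) \<in> decs k r ?z" unfolding decs_def by (simp add: Ddiff_zero)
  moreover have "cost k r (\<lambda>j. ?z) = 0" unfolding cost_def by (simp add: Dnorm_zero)
  ultimately have "NN k r ?z \<le> 0" using NN_le by metis
  then show ?thesis using NN_nonneg by (metis antisym)
qed

lemma decs_add:
  assumes "D1 \<in> decs k r Q1" "D2 \<in> decs k r Q2"
  shows "(\<lambda>j. cadd (D1 j) (D2 j)) \<in> decs k r (cadd Q1 Q2)"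
    and "cost k r (\<lambda>j. cadd (D1 j) (D2 j)) \<le> cost k r D1 + cost k r D2"
proof -
  show "(\<lambda>j. cadd (D1 j) (D2 j)) \<in> decs k r (cadd Q1 Q2)"
    unfolding decs_def
  proof (intro CollectI conjI allI impI)
    fix j assume "j \<le> r"
    then show "cadd (D1 j) (D2 j) \<in> Ddiff k j" using assms Ddiff_add unfolding decs_def by blast
  next
    show "cadd Q1 Q2 = (\<lambda>q I. \<Sum>j\<le>r. cadd (D1 j) (D2 j) q I)"
      using assms unfolding decs_def by (auto simp: cadd_def sum.distrib fun_eq_iff)
  qed
  have "cost k r (\<lambda>j. cadd (D1 j) (D2 j)) \<le> (\<Sum>j\<le>r. Dnorm k j (D1 j) + Dnorm k j (D2 j))"
    unfolding cost_def using assms unfolding decs_def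
    by (intro sum_mono Dnorm_add) (auto intro: Ddiff_chains)
  also have "\<dots> = cost k r D1 + cost k r D2" unfolding cost_def by (simp add: sum.distrib)
  finally show "cost k r (\<lambda>j. cadd (D1 j) (D2 j)) \<le> cost k r D1 + cost k r D2" .
qed

lemma decs_scale:
  assumes "D \<in> decs k r Q" "0 \<le> t"
  shows "(\<lambda>j. cscale t (D j)) \<in> decs k r (cscale t Q)"
    and "cost k r (\<lambda>j. cscale t (D j)) \<le> ereal t * cost k r D"
proof -
  show "(\<lambda>j. cscale t (D j)) \<in> decs k r (cscale t Q)"
    unfolding decs_def
  proof (intro CollectI conjI allI impI)
    fix j assume "j \<le> r"
    then show "cscale t (D j) \<in> Ddiff k j" using assms Ddiff_scale unfolding decs_def by blast
  next
    show "cscale t Q = (\<lambda>q I. \<Sum>j\<le>r. cscale t (D j) q I)"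
      using assms unfolding decs_def by (auto simp: cscale_def sum_distrib_left fun_eq_iff)
  qed
  have "cost k r (\<lambda>j. cscale t (D j)) \<le> (\<Sum>j\<le>r. ereal t * Dnorm k j (D j))"
    unfolding cost_def using assms unfolding decs_def
    by (intro sum_mono Dnorm_scale) (auto intro: Ddiff_chains)
  also have "\<dots> = ereal t * cost k r D" unfolding cost_def
    by (rule sum_ereal_right_distrib[symmetric]) (simp add: Dnorm_nonneg)
  finally show "cost k r (\<lambda>j. cscale t (D j)) \<le> ereal t * cost k r D" .
qed

definition pp :: "nat \<Rightarrow> nat \<Rightarrow> 'a::euclidean_space chain \<Rightarrow> real" where
  "pp k r Q = real_of_ereal (NN k r Q)"

lemma pp_eq: "Q \<in> chains k \<Longrightarrow> ereal (pp k r Q) = NN k r Q"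
  unfolding pp_def using NN_fin[of Q k r] NN_nonneg[of k r Q] by (cases "NN k r Q") auto

lemma approx:
  assumes "Q \<in> chains k" "0 < e"
  shows "\<exists>D\<in>decs k r Q. cost k r D < ereal (pp k r Q + e)"
proof -
  have "NN k r Q = ereal (pp k r Q)" using pp_eq[OF assms(1), of r] by simp
  then have "NN k r Q < ereal (pp k r Q + e)" using assms(2) by simp
  then show ?thesis unfolding NN_def by (simp add: INF_less_iff)
qed

lemma pp_sub:
  assumes "Q1 \<in> chains k" "Q2 \<in> chains k"
  shows "pp k r (cadd Q1 Q2) \<le> pp k r Q1 + pp k r Q2"
proof (rule field_le_epsilon)
  fix e :: real assume e: "0 < e"
  obtain D1 where D1: "D1 \<in> decs k r Q1" "cost k r D1 < ereal (pp k r Q1 + e / 2)"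
    using approx[OF assms(1), of "e/2" r] e by auto
  obtain D2 where D2: "D2 \<in> decs k r Q2" "cost k r D2 < ereal (pp k r Q2 + e / 2)"
    using approx[OF assms(2), of "e/2" r] e by auto
  have "ereal (pp k r (cadd Q1 Q2)) \<le> cost k r (\<lambda>j. cadd (D1 j) (D2 j))"
    using pp_eq[OF chains_add[OF assms]] NN_le[OF decs_add(1)[OF D1(1) D2(1)]] by simp
  also have "\<dots> \<le> cost k r D1 + cost k r D2" by (rule decs_add(2)[OF D1(1) D2(1)])
  also have "\<dots> \<le> ereal (pp k r Q1 + e / 2) + ereal (pp k r Q2 + e / 2)"
    using D1(2) D2(2) by (intro add_mono) auto
  finally show "pp k r (cadd Q1 Q2) \<le> pp k r Q1 + pp k r Q2 + e" by simp
qed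

lemma pp_hom_le:
  assumes "Q \<in> chains k" "0 < t"
  shows "pp k r (cscale t Q) \<le> t * pp k r Q"
proof (rule field_le_epsilon)
  fix e :: real assume e: "0 < e"
  obtain D where D: "D \<in> decs k r Q" "cost k r D < ereal (pp k r Q + e / t)"
    using approx[OF assms(1), of "e/t" r] e assms(2) by auto
  have "ereal (pp k r (cscale t Q)) \<le> cost k r (\<lambda>j. cscale t (D j))"
    using pp_eq[OF chains_scale[OF assms(1)]] NN_le[OF decs_scale(1)[OF D(1)]] assms(2) by simp
  also have "\<dots> \<le> ereal t * cost k r D" using decs_scale(2)[OF D(1)] assms(2) by simp
  also have "\<dots> \<le> ereal t * ereal (pp k r Q + e / t)"
    using D(2) assms(2) by (intro ereal_mult_left_mono) auto
  finally show "pp k r (cscale t Q) \<le> t * pp k r Q + e"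
    using assms(2) by (simp add: distrib_left)
qed

lemma pp_hom:
  assumes "Q \<in> chains k" "0 < t"
  shows "pp k r (cscale t Q) = t * pp k r Q"
proof (rule antisym)
  show "pp k r (cscale t Q) \<le> t * pp k r Q" by (rule pp_hom_le[OF assms])
  have "pp k r Q = pp k r (cscale (1/t) (cscale t Q))"
    using assms(2) by (simp add: cscale_cscale cscale_one)
  also have "\<dots> \<le> (1/t) * pp k r (cscale t Q)"
    using assms by (intro pp_hom_le chains_scale) auto
  finally show "t * pp k r Q \<le> pp k r (cscale t Q)"
    using assms(2) by (simp add: field_simps)
qed

lemma pp_zero: "pp k r (\<lambda>_ _. 0) = 0"
  unfolding pp_def by (simp add: NN_zero)

lemma partA_j:
  assumes "kform k \<Omega>" "formnorm k j \<Omega> < Orderings.top" "X \<in> Ddiff k j" "Dnorm k j X \<noteq> \<infinity>"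
  shows "\<Omega> X \<le> real_of_ereal (Dnorm k j X) * enn2real (formnorm k j \<Omega>)"
proof (cases "formnorm k j \<Omega> = 0")
  case False
  then have pos: "0 < formnorm k j \<Omega>" by (simp add: zero_less_iff_neq_zero)
  let ?F = "enn2real (formnorm k j \<Omega>)"
  have F0: "?F > 0" using pos assms(2) by (simp add: enn2real_positive_iff)
  have "ereal (\<Omega> X / ?F) \<le> Dnorm k j X" by (rule Dnorm_ratio[OF assms(1) pos assms(2)])
  then have "\<Omega> X / ?F \<le> real_of_ereal (Dnorm k j X)"
    using assms(4) Dnorm_nonneg[of k j X] by (cases "Dnorm k j X") auto
  then show ?thesis using F0 by (simp add: divide_le_eq)
next
  case True
  show ?thesis
  proof (cases "k = 0")
    case False
    obtain n :: nat and c U p w where 1: "\<forall>i<n. length (U i) = j \<and> length (w i) = k"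
      "X = (\<lambda>q I. \<Sum>i<n. c i * gen (U i) (p i) (w i) q I)"
      using assms(3) unfolding Ddiff_alt by blast
    have "\<Omega> X = (\<Sum>i<n. c i * \<Omega> (gen (U i) (p i) (w i)))"
      using Ddiff_eval[OF assms(1) 1(1)] 1(2) by simp
    also have "\<dots> = 0"
      using formnorm_zero_kill[OF assms(1) _ True] False 1(1) by simp
    finally show ?thesis using True by simp
  next
    case k0: True
    have "\<not> \<Omega> X > 0"
      using formnorm0_zero_Dnorm_inf[of \<Omega> j X] assms(1,3,4) True k0 by auto
    then show ?thesis using True by simp
  qed
qed

lemma formnorm_le_natnorm: "j \<le> r \<Longrightarrow> formnorm k j \<Omega> \<le> natnorm k r \<Omega>"
  unfolding natnorm_def by (intro Max_ge) auto

lemma partA: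
  assumes "D \<in> decs k r P"
  shows "chain_natnorm k r P \<le> cost k r D"
  unfolding chain_natnorm_def
proof (rule Sup_least)
  fix x assume "x \<in> insert 0 {ereal (\<Omega> P / enn2real (natnorm k r \<Omega>)) | \<Omega>.
      kform k \<Omega> \<and> (\<exists>Q\<in>chains k. \<Omega> Q \<noteq> 0) \<and> natnorm k r \<Omega> < Orderings.top}"
  then consider "x = 0" | \<Omega> where "x = ereal (\<Omega> P / enn2real (natnorm k r \<Omega>))" "kform k \<Omega>"
      "natnorm k r \<Omega> < Orderings.top" by blast
  then show "x \<le> cost k r D"
  proof cases
    case 1 then show ?thesis using cost_nonneg[of k r D] by simp
  next
    case 2
    have Dj: "\<And>j. j \<le> r \<Longrightarrow> D j \<in> Ddiff k j" and Peq: "P = (\<lambda>q I. \<Sum>j\<le>r. D j q I)"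
      using assms unfolding decs_def by auto
    show ?thesis
    proof (cases "\<exists>j\<le>r. Dnorm k j (D j) = \<infinity>")
      case True
      then have "cost k r D = \<infinity>" unfolding cost_def by (auto simp: sum_Pinfty)
      then show ?thesis by simp
    next
      case False
      define d where "d j = real_of_ereal (Dnorm k j (D j))" for j
      have dj: "Dnorm k j (D j) = ereal (d j)" if "j \<le> r" for j
        using False that Dnorm_nonneg[of k j "D j"] unfolding d_def by (cases "Dnorm k j (D j)") auto
      have d0: "0 \<le> d j" if "j \<le> r" for j using dj[OF that] Dnorm_nonneg[of k j "D j"] by simp
      have cst: "cost k r D = ereal (\<Sum>j\<le>r. d j)" unfolding cost_def using dj by simp
      let ?n = "enn2real (natnorm k r \<Omega>)"
      show ?thesis
      proof (cases "?n = 0")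
        case True then show ?thesis using 2 cost_nonneg[of k r D] by (simp add: zero_ereal_def[symmetric])
      next
        case False
        have npos: "?n > 0" using False by (simp add: less_le)
        have "\<Omega> P = (\<Sum>j\<le>r. \<Omega> (D j))"
          using kform_sum[OF 2(2), of "{..r}" D] Dj Ddiff_chains Peq by auto
        also have "\<dots> \<le> (\<Sum>j\<le>r. d j * ?n)"
        proof (intro sum_mono)
          fix j assume "j \<in> {..r}"
          then have j: "j \<le> r" by simp
          have fl: "formnorm k j \<Omega> \<le> natnorm k r \<Omega>" by (rule formnorm_le_natnorm[OF j])
          then have ft: "formnorm k j \<Omega> < Orderings.top" using 2(3) by (rule le_less_trans)
          have "\<Omega> (D j) \<le> d j * enn2real (formnorm k j \<Omega>)"
            using partA_j[OF 2(2) ft Dj[OF j]] dj[OF j] by simp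
          also have "\<dots> \<le> d j * ?n"
            using enn2real_mono[OF fl 2(3)] d0[OF j] by (intro mult_left_mono) auto
          finally show "\<Omega> (D j) \<le> d j * ?n" .
        qed
        also have "\<dots> = (\<Sum>j\<le>r. d j) * ?n" by (simp add: sum_distrib_right)
        finally have "\<Omega> P / ?n \<le> (\<Sum>j\<le>r. d j)" using npos by (simp add: divide_le_eq)
        then show ?thesis using 2(1) cst by simp
      qed
    qed
  qed
qed

lemma partB:
  assumes P: "P \<in> chains k"
  shows "NN k r P \<le> chain_natnorm k r P"
proof (cases "pp k r P = 0")
  case True
  then have "NN k r P = 0" using pp_eq[OF P] by (metis zero_ereal_def)
  moreover have "0 \<le> chain_natnorm k r P" unfolding chain_natnorm_def by (rule Sup_upper) simp
  ultimately show ?thesis by simp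
next
  case False
  have "0 \<le> ereal (pp k r P)" using pp_eq[OF P, of r] NN_nonneg[of k r P] by simp
  then have ppP: "pp k r P > 0" using False by (simp add: less_le)
  obtain f where f: "\<forall>x\<in>chains k. \<forall>y\<in>chains k. f (cadd x y) = f x + f y"
    "\<forall>t. \<forall>x\<in>chains k. f (cscale t x) = t * f x" "f P = pp k r P" "\<forall>x\<in>chains k. f x \<le> pp k r x"
    using HB[of "chains k" "pp k r" P, OF chains_zero chains_add chains_scale pp_sub pp_hom pp_zero P]
    by blast
  have kf: "kform k f" unfolding kform_def using f(1,2) by blast
  have fn1: "formnorm k j f \<le> 1" if "j \<le> r" for j
  proof (rule formnorm_leI)
    fix U :: "'a list" and p :: 'a and w :: "'a list" assume u: "length U = j" "length w = k" "prod_list (map norm U) * mass w = 1"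
    have E: "gen U p w \<in> chains k" using chains_gen[OF u(2)] .
    have "f (cscale s (gen U p w)) \<le> 1" if "\<bar>s\<bar> \<le> 1" for s
    proof -
      have "f (cscale s (gen U p w)) \<le> pp k r (cscale s (gen U p w))"
        using f(4) chains_scale[OF E] by blast
      also have "ereal \<dots> \<le> 1"
        using pp_eq[OF chains_scale[OF E]] NN_gen[OF \<open>j \<le> r\<close> u that] by simp
      then have "pp k r (cscale s (gen U p w)) \<le> 1" by simp
      finally show ?thesis .
    qed
    from this[of 1] this[of "-1"] have "\<bar>f (gen U p w)\<bar> \<le> 1"
      using f(2) E by (simp add: cscale_one abs_le_iff)
    then show "ennreal \<bar>f (gen U p w)\<bar> \<le> 1" by (simp add: ennreal_le_1)
  qed
  have nn1: "natnorm k r f \<le> 1" unfolding natnorm_def using fn1 by (subst Max_le_iff) auto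
  then have ntop: "natnorm k r f < Orderings.top" by (simp add: le_less_trans)
  have fpos: "0 < formnorm k 0 f"
  proof (rule ccontr)
    assume "\<not> 0 < formnorm k 0 f"
    then have z: "formnorm k 0 f = 0" by (simp add: zero_less_iff_neq_zero)
    obtain n :: nat and c U p w where 1: "\<forall>i<n. length (U i) = 0 \<and> length (w i) = k"
      "P = (\<lambda>q I. \<Sum>i<n. c i * gen (U i) (p i) (w i) q I)"
      using chains_Ddiff0[OF P] unfolding Ddiff_alt by blast
    have "f (gen (U i) (p i) (w i)) = 0" if "i < n" for i
      using formnorm_bound0[OF kf, of "w i" "p i"] 1(1) that z by simp
    then have "f P = 0" using Ddiff_eval[OF kf 1(1)] 1(2) by simp
    then show False using f(3) ppP by simp
  qed
  have npos: "0 < natnorm k r f" using fpos formnorm_le_natnorm[of 0 r k f] by simp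
  let ?n = "enn2real (natnorm k r f)"
  have n0: "0 < ?n" using npos ntop by (simp add: enn2real_positive_iff)
  have n1: "?n \<le> 1" using enn2real_mono[OF nn1] by simp
  have "ereal (f P / ?n) \<le> chain_natnorm k r P"
    unfolding chain_natnorm_def
  proof (rule Sup_upper)
    have "\<exists>Q\<in>chains k. f Q \<noteq> 0" using P f(3) ppP by (intro bexI[of _ P]) auto
    then show "ereal (f P / ?n) \<in> insert 0 {ereal (\<Omega> P / enn2real (natnorm k r \<Omega>)) | \<Omega>.
      kform k \<Omega> \<and> (\<exists>Q\<in>chains k. \<Omega> Q \<noteq> 0) \<and> natnorm k r \<Omega> < Orderings.top}"
      using kf ntop by blast
  qed
  moreover have "pp k r P \<le> f P / ?n" using f(3) ppP n0 n1 by (simp add: le_divide_eq mult_left_le)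
  ultimately show ?thesis using pp_eq[OF P] by (metis ereal_less_eq(3) order_trans)
qed

theorem mainTheorem2:
  fixes P :: "'a::euclidean_space chain" and k r :: nat
  assumes "P \<in> chains k"
  shows "chain_natnorm k r P =
    (INF D \<in> {D. (\<forall>j\<le>r. D j \<in> Ddiff k j) \<and> P = (\<lambda>q I. \<Sum>j\<le>r. D j q I)}.
       \<Sum>j\<le>r. Dnorm k j (D j))"
proof -
  have eq: "(INF D \<in> {D. (\<forall>j\<le>r. D j \<in> Ddiff k j) \<and> P = (\<lambda>q I. \<Sum>j\<le>r. D j q I)}.
       \<Sum>j\<le>r. Dnorm k j (D j)) = NN k r P"
    unfolding NN_def decs_def cost_def ..
  have "chain_natnorm k r P \<le> NN k r P"
    unfolding NN_def by (rule INF_greatest) (rule partA)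
  moreover have "NN k r P \<le> chain_natnorm k r P" by (rule partB[OF assms])
  ultimately show ?thesis unfolding eq by (rule antisym)
qed

end
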